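(* Let $t,t'\in B_n$ with $t\neq t'$, let $G$ be a digraph such that $\mathbb{A}(G)$ satisfies $t\approx t'$, and write $L=L_{t,t'}$, $\omega=\omega_{t,t'}$. If $v_0\to v_1\to\dots\to v_{L+1}$ is a walk in $G$ such that $v_{L+1}$ belongs to a nontrivial strongly connected component, $r\in\{1,\dots,L+1\}$, and $v_{r-1}\to v'_r\to v'_{r+1}\to\dots\to v'_{\omega(r)}$ is a walk in $G$, then $v'_{L+1}$ belongs to a nontrivial strongly connected component. Consequently, $\omega_G(L+1,r)<\omega(r)$ for all $r\in\{1,\dots,L+1\}$.
   Context: Digraphs $G=(V,E)$ have $E\subseteq V\times V$, loops allowed, possibly infinite. $\mathbb{A}(G)$ is the groupoid on $V\cup\{\infty\}$ with $xy=x$ if $x,y\in V$, $(x,y)\in E$, and $xy=\infty$ otherwise. $B_n$: binary terms with $x_1,\dots,x_n$ each occurring once in this order; $G(t)$: rooted tree defined by $G(x_i)$ a single vertex and $G(t_1t_2)=G(t_1)\cup G(t_2)$ plus an edge from the leftmost variable of $t_1$ to that of $t_2$; root $x_1$. $d_T$ is depth, $h$ height, $T_x$ the rooted induced subtree of $x$ and its descendants. With $T=G(t)$, $T'=G(t')$: $L_{t,t'}$ is the largest $m$ such that for all $x$, $d_T(x)\le m$ or $d_{T'}(x)\le m$ implies $d_T(x)=d_{T'}(x)$. Let $\Delta=\{x:T_x\ne T'_x\}$, $\Omega=\{(d_T(x),h(T_x)),(d_{T'}(x),h(T'_x)):x\in\Delta\}$, $\xi=\min\{d+h:(d,h)\in\Omega\}$;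 for integers $r\ge0$, $\omega_{t,t'}(r)=\min\{d+h:(d,h)\in\Omega,\ d\le r\}$ if $r<\xi$ and $\omega_{t,t'}(r)=\xi$ if $r\ge\xi$ (one has $\omega_{t,t'}(r)>L_{t,t'}$). A strongly connected component (SCC) is trivial if it is a single vertex without a loop, nontrivial otherwise. For $\ell\ge r\ge1$, $\omega_G(\ell,r)$ is the largest integer $m$ such that there exist a walk $v_0\to\dots\to v_\ell$ with $v_\ell$ in a nontrivial SCC and a walk $v_{r-1}\to v'_r\to\dots\to v'_m$ with $v'_\ell$ in a trivial SCC ($\infty$ if unbounded, $-\infty$ if none). *)

theory Defs
  imports "HOL-Library.Extended_Real"
begin

text \<open>A digraph is given by its edge relation E on the vertex type 'v (vertex set = UNIV).
  The groupoid A(G) has carrier 'v option, where None plays the role of infinity.\<close>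

definition gmult :: "('v \<times> 'v) set \<Rightarrow> 'v option \<Rightarrow> 'v option \<Rightarrow> 'v option" where
  "gmult E a b = (case (a, b) of
      (Some x, Some y) \<Rightarrow> (if (x, y) \<in> E then Some x else None)
    | _ \<Rightarrow> None)"

datatype bterm = Var nat | App bterm bterm

fun leaves :: "bterm \<Rightarrow> nat list" where
  "leaves (Var i) = [i]"
| "leaves (App t1 t2) = leaves t1 @ leaves t2"

definition B :: "nat \<Rightarrow> bterm set" where
  "B n = {t. leaves t = [1..<n+1]}"

fun eval :: "('v \<times> 'v) set \<Rightarrow> (nat \<Rightarrow> 'v option) \<Rightarrow> bterm \<Rightarrow> 'v option" where
  "eval E \<sigma> (Var i) = \<sigma> i"
| "eval E \<sigma> (App t1 t2) = gmult E (eval E \<sigma> t1) (eval E \<sigma> t2)"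

definition satisfies :: "('v \<times> 'v) set \<Rightarrow> bterm \<Rightarrow> bterm \<Rightarrow> bool" where
  "satisfies E t t' \<longleftrightarrow> (\<forall>\<sigma>. eval E \<sigma> t = eval E \<sigma> t')"

fun lm :: "bterm \<Rightarrow> nat" where
  "lm (Var i) = i"
| "lm (App t1 t2) = lm t1"

fun tree_edges :: "bterm \<Rightarrow> (nat \<times> nat) set" where
  "tree_edges (Var i) = {}"
| "tree_edges (App t1 t2) = tree_edges t1 \<union> tree_edges t2 \<union> {(lm t1, lm t2)}"

text \<open>Depth d_T(x): distance from the root (= leftmost variable) of G(t).\<close>
definition depth :: "bterm \<Rightarrow> nat \<Rightarrow> nat" where
  "depth t x = (LEAST k. (lm t, x) \<in> (tree_edges t) ^^ k)"

definition desc :: "(nat \<times> nat) set \<Rightarrow> nat \<Rightarrow> nat set" where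
  "desc E x = {y. (x, y) \<in> E\<^sup>*}"

definition subtree :: "(nat \<times> nat) set \<Rightarrow> nat \<Rightarrow> nat set \<times> (nat \<times> nat) set" where
  "subtree E x = (desc E x, E \<inter> (desc E x \<times> desc E x))"

definition height_sub :: "(nat \<times> nat) set \<Rightarrow> nat \<Rightarrow> nat" where
  "height_sub E x = Max {k. \<exists>y. (x, y) \<in> (snd (subtree E x)) ^^ k}"

definition Lpar :: "bterm \<Rightarrow> bterm \<Rightarrow> nat" where
  "Lpar t t' = (GREATEST m. \<forall>x \<in> set (leaves t).
      (depth t x \<le> m \<or> depth t' x \<le> m) \<longrightarrow> depth t x = depth t' x)"

definition Delta :: "bterm \<Rightarrow> bterm \<Rightarrow> nat set" where
  "Delta t t' = {x \<in> set (leaves t). subtree (tree_edges t) x \<noteq> subtree (tree_edges t') x}"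

definition Omega :: "bterm \<Rightarrow> bterm \<Rightarrow> (nat \<times> nat) set" where
  "Omega t t' = (\<Union>x \<in> Delta t t'.
      {(depth t x, height_sub (tree_edges t) x), (depth t' x, height_sub (tree_edges t') x)})"

definition xi :: "bterm \<Rightarrow> bterm \<Rightarrow> nat" where
  "xi t t' = Min {d + h | d h. (d, h) \<in> Omega t t'}"

definition omega :: "bterm \<Rightarrow> bterm \<Rightarrow> nat \<Rightarrow> nat" where
  "omega t t' r = (if r < xi t t' then Min {d + h | d h. (d, h) \<in> Omega t t' \<and> d \<le> r}
                   else xi t t')"

definition scc :: "('v \<times> 'v) set \<Rightarrow> 'v \<Rightarrow> 'v set" where
  "scc E u = {w. (u, w) \<in> E\<^sup>* \<and> (w, u) \<in> E\<^sup>*}"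

definition nontrivial_scc :: "('v \<times> 'v) set \<Rightarrow> 'v \<Rightarrow> bool" where
  "nontrivial_scc E u \<longleftrightarrow> \<not> (scc E u = {u} \<and> (u, u) \<notin> E)"

definition walk :: "('v \<times> 'v) set \<Rightarrow> (nat \<Rightarrow> 'v) \<Rightarrow> nat \<Rightarrow> nat \<Rightarrow> bool" where
  "walk E w a b \<longleftrightarrow> (\<forall>i. a \<le> i \<and> i < b \<longrightarrow> (w i, w (Suc i)) \<in> E)"

definition omegaG_set :: "('v \<times> 'v) set \<Rightarrow> nat \<Rightarrow> nat \<Rightarrow> nat set" where
  "omegaG_set E l r = {m. l \<le> m \<and> (\<exists>v w. walk E v 0 l \<and> nontrivial_scc E (v l)
       \<and> w (r - 1) = v (r - 1) \<and> walk E w (r - 1) m \<and> \<not> nontrivial_scc E (w l))}"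

text \<open>omega_G(l,r) in the extended reals: Sup {} = -infinity, unbounded gives infinity.\<close>
definition omegaG :: "('v \<times> 'v) set \<Rightarrow> nat \<Rightarrow> nat \<Rightarrow> ereal" where
  "omegaG E l r = Sup ((\<lambda>m. ereal (real m)) ` omegaG_set E l r)"

end

theory Submission
  imports Defs
begin

definition cons :: "bterm \<Rightarrow> bool" where
  "cons t \<longleftrightarrow> leaves t = [lm t..<lm t + length (leaves t)]"

lemma leaves_ne: "leaves t \<noteq> []" by (induction t) auto

lemma hd_leaves: "hd (leaves t) = lm t" by (induction t) (auto simp: leaves_ne)

lemma cons_AppD:
  assumes "cons (App t1 t2)"
  shows "cons t1" "cons t2" "lm t2 = lm t1 + length (leaves t1)"
proof -
  let ?a = "lm t1" and ?l1 = "length (leaves t1)" and ?l2 = "length (leaves t2)"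
  have "leaves t1 @ leaves t2 = [?a..<?a + ?l1 + ?l2]" using assms by (simp add: cons_def add.assoc)
  also have "\<dots> = [?a..<?a + ?l1] @ [?a + ?l1..<?a + ?l1 + ?l2]"
    by (rule upt_add_eq_append) simp
  finally have e: "leaves t1 @ leaves t2 = [?a..<?a + ?l1] @ [?a + ?l1..<?a + ?l1 + ?l2]" .
  have e1: "leaves t1 = [?a..<?a + ?l1]" and e2: "leaves t2 = [?a + ?l1..<?a + ?l1 + ?l2]"
    using e by (simp_all add: append_eq_append_conv)
  show "cons t1" using e1 by (simp add: cons_def)
  have "lm t2 = hd (leaves t2)" by (simp add: hd_leaves)
  also have "\<dots> = ?a + ?l1"
  proof -
    have l: "0 < ?l2" using leaves_ne[of t2] by auto
    have "hd [?a + ?l1..<?a + ?l1 + ?l2] = ?a + ?l1" by (rule hd_upt) (use l in simp)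
    then show ?thesis using e2 by simp
  qed
  finally show l2: "lm t2 = lm t1 + length (leaves t1)" .
  show "cons t2" using e2 l2 by (simp add: cons_def)
qed

lemma cons_set: "cons t \<Longrightarrow> set (leaves t) = {lm t..<lm t + length (leaves t)}"
  unfolding cons_def by (metis set_upt)

lemma lm_in: "lm t \<in> set (leaves t)"
  by (metis hd_in_set hd_leaves leaves_ne)

fun dep :: "bterm \<Rightarrow> nat \<Rightarrow> nat" where
  "dep (Var i) y = 0"
| "dep (App t1 t2) y = (if y \<in> set (leaves t1) then dep t1 y else Suc (dep t2 y))"

fun par :: "bterm \<Rightarrow> nat \<Rightarrow> nat" where
  "par (Var i) y = i"
| "par (App t1 t2) y = (if y \<in> set (leaves t1) then par t1 y
      else if y = lm t2 then lm t1 else par t2 y)"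

lemma cons_disj:
  assumes "cons (App t1 t2)"
  shows "y \<in> set (leaves t1) \<Longrightarrow> y < lm t2"
    and "y \<in> set (leaves t2) \<Longrightarrow> lm t2 \<le> y"
    and "y \<in> set (leaves t1) \<Longrightarrow> lm t1 \<le> y"
  using cons_set[OF cons_AppD(1)[OF assms]] cons_set[OF cons_AppD(2)[OF assms]] cons_AppD(3)[OF assms]
  by auto

lemma tree_facts:
  assumes "cons t"
  shows "tree_edges t = {(par t y, y) | y. y \<in> set (leaves t) \<and> y \<noteq> lm t}
     \<and> dep t (lm t) = 0
     \<and> (\<forall>y \<in> set (leaves t). y \<noteq> lm t \<longrightarrow> par t y \<in> set (leaves t) \<and> par t y < y
           \<and> dep t y = Suc (dep t (par t y)))
     \<and> (\<forall>y \<in> set (leaves t). \<forall>j. y \<noteq> lm t \<and> par t y < j \<and> j < y \<longrightarrow> dep t y \<le> dep t j)"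
  using assms
proof (induction t)
  case (Var i)
  then show ?case by simp
next
  case (App t1 t2)
  have c1: "cons t1" and c2: "cons t2" and k: "lm t2 = lm t1 + length (leaves t1)"
    using cons_AppD[OF App.prems] by auto
  note IH1 = App.IH(1)[OF c1] and IH2 = App.IH(2)[OF c2]
  note S1 = cons_set[OF c1] and S2 = cons_set[OF c2]
  have dis: "y \<in> set (leaves t1) \<Longrightarrow> y \<notin> set (leaves t2)" for y using S1 S2 k by auto
  have lm2_notin: "lm t2 \<notin> set (leaves t1)" using lm_in[of t2] dis by blast
  have lm1_in: "lm t1 \<in> set (leaves t1)" by (rule lm_in)
  have E: "tree_edges (App t1 t2) = {(par (App t1 t2) y, y) | y. y \<in> set (leaves (App t1 t2)) \<and> y \<noteq> lm (App t1 t2)}"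
  proof -
    have "tree_edges (App t1 t2) = {(par t1 y, y) | y. y \<in> set (leaves t1) \<and> y \<noteq> lm t1}
        \<union> {(par t2 y, y) | y. y \<in> set (leaves t2) \<and> y \<noteq> lm t2} \<union> {(lm t1, lm t2)}"
      using IH1 IH2 by simp
    also have "\<dots> = {(par (App t1 t2) y, y) | y. y \<in> set (leaves (App t1 t2)) \<and> y \<noteq> lm (App t1 t2)}"
    proof (rule set_eqI, rule iffI)
      fix e assume "e \<in> {(par t1 y, y) | y. y \<in> set (leaves t1) \<and> y \<noteq> lm t1}
        \<union> {(par t2 y, y) | y. y \<in> set (leaves t2) \<and> y \<noteq> lm t2} \<union> {(lm t1, lm t2)}"
      then consider (a) y where "e = (par t1 y, y)" "y \<in> set (leaves t1)" "y \<noteq> lm t1"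
        | (b) y where "e = (par t2 y, y)" "y \<in> set (leaves t2)" "y \<noteq> lm t2"
        | (c) "e = (lm t1, lm t2)" by blast
      then show "e \<in> {(par (App t1 t2) y, y) | y. y \<in> set (leaves (App t1 t2)) \<and> y \<noteq> lm (App t1 t2)}"
      proof cases
        case a then show ?thesis by auto
      next
        case b
        then have "y \<notin> set (leaves t1)" using dis by blast
        moreover have "y \<noteq> lm t1" using b(2) lm1_in dis by blast
        ultimately show ?thesis using b by (intro CollectI exI[of _ y]) auto
      next
        case c
        then show ?thesis using lm2_notin lm_in[of t2] lm1_in dis
          by (intro CollectI exI[of _ "lm t2"]) auto
      qed
    next
      fix e assume "e \<in> {(par (App t1 t2) y, y) | y. y \<in> set (leaves (App t1 t2)) \<and> y \<noteq> lm (App t1 t2)}"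
      then obtain y where e: "e = (par (App t1 t2) y, y)" "y \<in> set (leaves t1) \<or> y \<in> set (leaves t2)" "y \<noteq> lm t1"
        by auto
      show "e \<in> {(par t1 y, y) | y. y \<in> set (leaves t1) \<and> y \<noteq> lm t1}
        \<union> {(par t2 y, y) | y. y \<in> set (leaves t2) \<and> y \<noteq> lm t2} \<union> {(lm t1, lm t2)}"
      proof (cases "y \<in> set (leaves t1)")
        case True then show ?thesis using e by auto
      next
        case False
        then show ?thesis using e by (cases "y = lm t2") auto
      qed
    qed
    finally show ?thesis .
  qed
  have D0: "dep (App t1 t2) (lm (App t1 t2)) = 0" using IH1 lm1_in by simp
  have P: "\<forall>y \<in> set (leaves (App t1 t2)). y \<noteq> lm (App t1 t2) \<longrightarrow>
      par (App t1 t2) y \<in> set (leaves (App t1 t2)) \<and> par (App t1 t2) y < y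
      \<and> dep (App t1 t2) y = Suc (dep (App t1 t2) (par (App t1 t2) y))"
  proof (intro ballI impI)
    fix y assume y: "y \<in> set (leaves (App t1 t2))" "y \<noteq> lm (App t1 t2)"
    show "par (App t1 t2) y \<in> set (leaves (App t1 t2)) \<and> par (App t1 t2) y < y
      \<and> dep (App t1 t2) y = Suc (dep (App t1 t2) (par (App t1 t2) y))"
    proof (cases "y \<in> set (leaves t1)")
      case True
      then show ?thesis using IH1 y by auto
    next
      case False
      then have y2: "y \<in> set (leaves t2)" using y by simp
      show ?thesis
      proof (cases "y = lm t2")
        case True
        have "dep t2 (lm t2) = 0" using IH2 by simp
        then show ?thesis using True False lm1_in IH1 S1 S2 k by auto
      next
        case False2: False
        have "par t2 y \<in> set (leaves t2)" "par t2 y < y" "dep t2 y = Suc (dep t2 (par t2 y))"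
          using IH2 y2 False2 by auto
        then show ?thesis using False False2 dis by auto
      qed
    qed
  qed
  have Q: "\<forall>y \<in> set (leaves (App t1 t2)). \<forall>j. y \<noteq> lm (App t1 t2) \<and> par (App t1 t2) y < j \<and> j < y
      \<longrightarrow> dep (App t1 t2) y \<le> dep (App t1 t2) j"
  proof (intro ballI allI impI)
    fix y j assume y: "y \<in> set (leaves (App t1 t2))"
      and h: "y \<noteq> lm (App t1 t2) \<and> par (App t1 t2) y < j \<and> j < y"
    show "dep (App t1 t2) y \<le> dep (App t1 t2) j"
    proof (cases "y \<in> set (leaves t1)")
      case True
      have "par t1 y \<in> set (leaves t1)" using IH1 True h by auto
      then have "j \<in> set (leaves t1)" using h True S1 by auto
      then show ?thesis using IH1 True h by auto
    next
      case False
      then have y2: "y \<in> set (leaves t2)" using y by simp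
      show ?thesis
      proof (cases "y = lm t2")
        case True
        then have j1: "j \<in> set (leaves t1)" "j \<noteq> lm t1" using h False S1 k by auto
        then have "dep t1 j \<noteq> 0" using IH1 by auto
        then show ?thesis using True False j1 IH2 by simp
      next
        case False2: False
        have pp: "par t2 y \<in> set (leaves t2)" using IH2 y2 False2 by auto
        then have j2: "j \<in> set (leaves t2)" using h False False2 S2 y2 by auto
        then have "j \<notin> set (leaves t1)" using dis by blast
        then show ?thesis using IH2 y2 False2 h False j2 by auto
      qed
    qed
  qed
  show ?case using E D0 P Q by blast
qed


locale ctree =
  fixes t :: bterm
  assumes cons: "cons t"
begin

abbreviation "V \<equiv> set (leaves t)"
abbreviation "rt \<equiv> lm t"
abbreviation "E \<equiv> tree_edges t"
abbreviation "D \<equiv> dep t"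
abbreviation "p \<equiv> par t"

lemma facts: "E = {(p y, y) | y. y \<in> V \<and> y \<noteq> rt}" "D rt = 0"
  "\<And>y. y \<in> V \<Longrightarrow> y \<noteq> rt \<Longrightarrow> p y \<in> V"
  "\<And>y. y \<in> V \<Longrightarrow> y \<noteq> rt \<Longrightarrow> p y < y"
  "\<And>y. y \<in> V \<Longrightarrow> y \<noteq> rt \<Longrightarrow> D y = Suc (D (p y))"
  "\<And>y j. y \<in> V \<Longrightarrow> y \<noteq> rt \<Longrightarrow> p y < j \<Longrightarrow> j < y \<Longrightarrow> D y \<le> D j"
  using tree_facts[OF cons] by auto

lemma Vset: "V = {rt..<rt + length (leaves t)}" using cons_set[OF cons] .

lemma rt_in: "rt \<in> V" by (rule lm_in)

lemma V_ge: "y \<in> V \<Longrightarrow> rt \<le> y" using Vset by auto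

lemma finV: "finite V" by simp

lemma edge_iff: "(a, b) \<in> E \<longleftrightarrow> b \<in> V \<and> b \<noteq> rt \<and> a = p b"
  using facts(1) by auto

lemma D_pos: "y \<in> V \<Longrightarrow> y \<noteq> rt \<Longrightarrow> 0 < D y" using facts(5) by auto

lemma D_zero: "y \<in> V \<Longrightarrow> D y = 0 \<longleftrightarrow> y = rt" using D_pos facts(2) by fastforce

lemma relpow_dep: "(x, y) \<in> E ^^ k \<Longrightarrow> x \<in> V \<Longrightarrow> y \<in> V \<and> D y = D x + k"
proof (induction k arbitrary: y)
  case 0 then show ?case by simp
next
  case (Suc k)
  from Suc.prems(1) obtain b where b: "(x, b) \<in> E ^^ k" "(b, y) \<in> E" by auto
  from Suc.IH[OF b(1) Suc.prems(2)] b(2) facts(5)[of y] show ?case by (auto simp: edge_iff)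
qed

lemma rtr_props: "(x, y) \<in> E\<^sup>* \<Longrightarrow> x \<in> V \<Longrightarrow> y \<in> V \<and> x \<le> y \<and> D x \<le> D y"
proof (induction rule: rtrancl_induct)
  case base then show ?case by simp
next
  case (step b c)
  then show ?case using facts(4)[of c] facts(5)[of c] by (auto simp: edge_iff)
qed

lemma root_reach: "y \<in> V \<Longrightarrow> (rt, y) \<in> E ^^ (D y)"
proof (induction y rule: less_induct)
  case (less y)
  show ?case
  proof (cases "y = rt")
    case True then show ?thesis using facts(2) by simp
  next
    case False
    have "(rt, p y) \<in> E ^^ D (p y)" using less facts(3,4)[of y] False by auto
    moreover have "(p y, y) \<in> E" using less.prems False by (simp add: edge_iff)
    ultimately show ?thesis using facts(5)[OF less.prems False] by auto
  qed
qed

lemma depth_eq: "y \<in> V \<Longrightarrow> depth t y = D y"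
  unfolding depth_def
proof (rule Least_equality)
  assume "y \<in> V" then show "(rt, y) \<in> E ^^ D y" by (rule root_reach)
next
  fix k assume "y \<in> V" "(rt, y) \<in> E ^^ k"
  then show "D y \<le> k" using relpow_dep[of rt y k] rt_in facts(2) by simp
qed

lemma desc_step: "(x, y) \<in> E\<^sup>* \<Longrightarrow> y \<noteq> x \<Longrightarrow> (x, p y) \<in> E\<^sup>* \<and> y \<in> V \<and> y \<noteq> rt"
  by (erule rtranclE) (auto simp: edge_iff)

lemma desc_child: "(x, y) \<in> E\<^sup>* \<Longrightarrow> y' \<in> V \<Longrightarrow> y' \<noteq> rt \<Longrightarrow> p y' = y \<Longrightarrow> (x, y') \<in> E\<^sup>*"
  by (metis edge_iff rtrancl.rtrancl_into_rtrancl)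

lemma par_not_desc: "x \<in> V \<Longrightarrow> x \<noteq> rt \<Longrightarrow> (x, p x) \<notin> E\<^sup>*"
  using rtr_props[of x "p x"] facts(4)[of x] by auto

lemma desc_char: assumes x: "x \<in> V"
  shows "(x, y) \<in> E\<^sup>* \<longleftrightarrow> (y \<in> V \<and> x \<le> y \<and> (\<forall>j. x < j \<and> j \<le> y \<longrightarrow> D x < D j))"
proof
  assume "(x, y) \<in> E\<^sup>*"
  then show "y \<in> V \<and> x \<le> y \<and> (\<forall>j. x < j \<and> j \<le> y \<longrightarrow> D x < D j)"
  proof (induction rule: rtrancl_induct)
    case base then show ?case using x by auto
  next
    case (step b c)
    have c: "c \<in> V" "c \<noteq> rt" "b = p c" using step.hyps(2) by (auto simp: edge_iff)
    have xb: "D x \<le> D b" using rtr_props[OF step.hyps(1) x] by simp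
    have Dc: "D c = Suc (D b)" using facts(5)[OF c(1,2)] c(3) by simp
    have "\<forall>j. x < j \<and> j \<le> c \<longrightarrow> D x < D j"
    proof (intro allI impI)
      fix j assume j: "x < j \<and> j \<le> c"
      show "D x < D j"
      proof (cases "j \<le> b")
        case True then show ?thesis using step.IH j by auto
      next
        case False
        show ?thesis
        proof (cases "j = c")
          case True then show ?thesis using Dc xb by simp
        next
          case False2: False
          have "D c \<le> D j" using facts(6)[OF c(1,2), of j] c(3) False False2 j by auto
          then show ?thesis using Dc xb by simp
        qed
      qed
    qed
    then show ?case using step.IH c facts(4)[OF c(1,2)] by auto
  qed
next
  assume h: "y \<in> V \<and> x \<le> y \<and> (\<forall>j. x < j \<and> j \<le> y \<longrightarrow> D x < D j)"
  then show "(x, y) \<in> E\<^sup>*"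
  proof (induction y rule: less_induct)
    case (less y)
    show ?case
    proof (cases "y = x")
      case True then show ?thesis by simp
    next
      case False
      then have xy: "x < y" using less.prems by simp
      have ynr: "y \<noteq> rt" using xy V_ge[OF x] by auto
      have yV: "y \<in> V" using less.prems by simp
      have pyV: "p y \<in> V" and pyy: "p y < y" using facts(3,4)[OF yV ynr] by auto
      have "x \<le> p y"
      proof (rule ccontr)
        assume "\<not> x \<le> p y"
        then have "D y \<le> D x" using facts(6)[OF yV ynr, of x] xy by simp
        moreover have "D x < D y" using less.prems xy by simp
        ultimately show False by simp
      qed
      then have "(x, p y) \<in> E\<^sup>*" using less.IH[OF pyy] pyV less.prems pyy by auto
      then show ?thesis using desc_child[OF _ yV ynr] by simp
    qed
  qed
qed

lemma relpow_restrict: "(x, y) \<in> E ^^ k \<Longrightarrow> (x, y) \<in> (E \<inter> desc E x \<times> desc E x) ^^ k"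
proof (induction k arbitrary: y)
  case 0 then show ?case by simp
next
  case (Suc k)
  from Suc.prems obtain b where b: "(x, b) \<in> E ^^ k" "(b, y) \<in> E" by auto
  have "(x, b) \<in> E\<^sup>*" using b(1) relpow_imp_rtrancl by blast
  then have "b \<in> desc E x" "y \<in> desc E x" using b(2) by (auto simp: desc_def)
  then show ?case using Suc.IH[OF b(1)] b(2) by auto
qed

lemma relpow_restrict_back: "(x, y) \<in> (E \<inter> A) ^^ k \<Longrightarrow> (x, y) \<in> E ^^ k"
  by (induction k arbitrary: y) auto

lemma height_set: assumes x: "x \<in> V"
  shows "{k. \<exists>y. (x, y) \<in> (snd (subtree E x)) ^^ k} = (\<lambda>y. D y - D x) ` desc E x"
proof (rule set_eqI, rule iffI)
  fix k assume "k \<in> {k. \<exists>y. (x, y) \<in> (snd (subtree E x)) ^^ k}"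
  then obtain y where "(x, y) \<in> (E \<inter> desc E x \<times> desc E x) ^^ k" by (auto simp: subtree_def)
  then have "(x, y) \<in> E ^^ k" by (rule relpow_restrict_back)
  then have "D y = D x + k" "(x, y) \<in> E\<^sup>*" using relpow_dep x relpow_imp_rtrancl by blast+
  then show "k \<in> (\<lambda>y. D y - D x) ` desc E x" by (intro image_eqI[of _ _ y]) (auto simp: desc_def)
next
  fix k assume "k \<in> (\<lambda>y. D y - D x) ` desc E x"
  then obtain y where y: "(x, y) \<in> E\<^sup>*" "k = D y - D x" by (auto simp: desc_def)
  then obtain k' where k': "(x, y) \<in> E ^^ k'" using rtrancl_power by blast
  then have "D y = D x + k'" using relpow_dep x by blast
  then have "k' = k" using y by simp
  then show "k \<in> {k. \<exists>y. (x, y) \<in> (snd (subtree E x)) ^^ k}"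
    using relpow_restrict[OF k'] by (auto simp: subtree_def)
qed

lemma desc_sub: "x \<in> V \<Longrightarrow> desc E x \<subseteq> V" using rtr_props by (auto simp: desc_def)

lemma height_props: assumes x: "x \<in> V"
  shows "\<And>y. (x, y) \<in> E\<^sup>* \<Longrightarrow> D y \<le> D x + height_sub E x"
    and "\<exists>y. (x, y) \<in> E\<^sup>* \<and> D y = D x + height_sub E x"
proof -
  have fin: "finite ((\<lambda>y. D y - D x) ` desc E x)"
    using desc_sub[OF x] finite_subset finV by blast
  have ne: "x \<in> desc E x" by (simp add: desc_def)
  have h: "height_sub E x = Max ((\<lambda>y. D y - D x) ` desc E x)"
    unfolding height_sub_def height_set[OF x] ..
  show "\<And>y. (x, y) \<in> E\<^sup>* \<Longrightarrow> D y \<le> D x + height_sub E x"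
  proof -
    fix y assume y: "(x, y) \<in> E\<^sup>*"
    have "D y - D x \<le> height_sub E x" unfolding h using fin y by (auto simp: desc_def)
    then show "D y \<le> D x + height_sub E x" by simp
  qed
  have "height_sub E x \<in> (\<lambda>y. D y - D x) ` desc E x" unfolding h using fin ne by (intro Max_in) auto
  then obtain y where y: "(x, y) \<in> E\<^sup>*" "height_sub E x = D y - D x" by (auto simp: desc_def)
  then show "\<exists>y. (x, y) \<in> E\<^sup>* \<and> D y = D x + height_sub E x"
    using rtr_props[OF y(1) x] by auto
qed

end


lemma length_leaves_App: "2 \<le> length (leaves (App a b))"
  using leaves_ne[of a] leaves_ne[of b] by (cases "leaves a"; cases "leaves b") auto

lemma dep_inj:
  assumes "cons t" "cons t'" "leaves t = leaves t'" "\<forall>y \<in> set (leaves t). dep t y = dep t' y"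
  shows "t = t'"
  using assms
proof (induction t arbitrary: t')
  case (Var i)
  show ?case
  proof (cases t')
    case (Var j) then show ?thesis using Var.prems by simp
  next
    case (App a b)
    have "leaves t' = [i]" using Var.prems(3) by simp
    then have "length (leaves t') = 1" by simp
    then show ?thesis using length_leaves_App[of a b] App by simp
  qed
next
  case (App t1 t2)
  obtain t1' t2' where t': "t' = App t1' t2'"
  proof (cases t')
    case (Var j)
    have "length (leaves (App t1 t2)) = 1" using App.prems(3) Var by simp
    then show ?thesis using length_leaves_App[of t1 t2] by simp
  next
    case (App a b) then show ?thesis using that by simp
  qed
  have c1: "cons t1" "cons t2" "lm t2 = lm t1 + length (leaves t1)" using cons_AppD[OF App.prems(1)] by auto
  have c1': "cons t1'" "cons t2'" "lm t2' = lm t1' + length (leaves t1')"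
    using cons_AppD[of t1' t2'] App.prems(2) t' by auto
  have lmeq: "lm t1 = lm t1'"
    using hd_leaves[of "App t1 t2"] hd_leaves[of "App t1' t2'"] App.prems(3) t' by simp
  note S1 = cons_set[OF c1(1)] and S2 = cons_set[OF c1(2)]
  note S1' = cons_set[OF c1'(1)] and S2' = cons_set[OF c1'(2)]
  have Vt: "set (leaves (App t1 t2)) = set (leaves t1) \<union> set (leaves t2)" by simp
  have Vt': "set (leaves (App t1' t2')) = set (leaves t1') \<union> set (leaves t2')" by simp
  have Veq: "set (leaves t1) \<union> set (leaves t2) = set (leaves t1') \<union> set (leaves t2')"
    using App.prems(3) t' by (metis leaves.simps(2) set_append)
  interpret A: ctree t2 by unfold_locales (rule c1(2))
  interpret B: ctree t2' by unfold_locales (rule c1'(2))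
  have dd: "dep (App t1 t2) y = dep (App t1' t2') y" if "y \<in> set (leaves t1) \<union> set (leaves t2)" for y
    using App.prems(4) t' that by auto
  have k: "lm t2 = lm t2'"
  proof (rule ccontr)
    assume ne: "lm t2 \<noteq> lm t2'"
    show False
    proof (cases "lm t2 < lm t2'")
      case True
      have n1: "lm t2' \<notin> set (leaves t1)" using S1 c1 True by auto
      have "lm t2' \<in> set (leaves t1) \<union> set (leaves t2)" using Veq lm_in[of t2'] by blast
      then have in2: "lm t2' \<in> set (leaves t2)" using n1 by blast
      have "dep t2 (lm t2') \<noteq> 0" using A.D_zero[OF in2] ne by simp
      then have "dep (App t1 t2) (lm t2') \<ge> 2" using n1 by simp
      moreover have "dep (App t1' t2') (lm t2') = 1"
        using B.facts(2) S1' c1' by simp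
      ultimately show False using dd[of "lm t2'"] in2 by simp
    next
      case False
      then have True': "lm t2' < lm t2" using ne by simp
      have n1: "lm t2 \<notin> set (leaves t1')" using S1' c1' True' by auto
      have "lm t2 \<in> set (leaves t1') \<union> set (leaves t2')" using Veq lm_in[of t2] by blast
      then have in2: "lm t2 \<in> set (leaves t2')" using n1 by blast
      have "dep t2' (lm t2) \<noteq> 0" using B.D_zero[OF in2] ne by simp
      then have "dep (App t1' t2') (lm t2) \<ge> 2" using n1 by simp
      moreover have "dep (App t1 t2) (lm t2) = 1"
        using A.facts(2) S1 c1 by simp
      ultimately show False using dd[of "lm t2"] lm_in[of t2] by simp
    qed
  qed
  have l1: "leaves t1 = leaves t1'"
    using c1(1) c1'(1) unfolding cons_def using c1(3) c1'(3) k lmeq by (metis add_left_cancel)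
  have l2: "leaves t2 = leaves t2'"
    using App.prems(3) t' l1 by simp
  have "t1 = t1'"
  proof (rule App.IH(1)[OF c1(1) c1'(1) l1])
    show "\<forall>y\<in>set (leaves t1). dep t1 y = dep t1' y"
    proof
      fix y assume y: "y \<in> set (leaves t1)"
      have "dep (App t1 t2) y = dep (App t1' t2') y" using dd y by blast
      then show "dep t1 y = dep t1' y" using y l1 by simp
    qed
  qed
  moreover have "t2 = t2'"
  proof (rule App.IH(2)[OF c1(2) c1'(2) l2])
    have d: "y \<notin> set (leaves t1)" if "y \<in> set (leaves t2)" for y using that S1 S2 c1 by auto
    show "\<forall>y\<in>set (leaves t2). dep t2 y = dep t2' y"
    proof
      fix y assume y: "y \<in> set (leaves t2)"
      have "dep (App t1 t2) y = dep (App t1' t2') y" using dd y by blast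
      then show "dep t2 y = dep t2' y" using y l1 d[OF y] by simp
    qed
  qed
  ultimately show ?case using t' by simp
qed

lemma B_facts:
  assumes "t \<in> B n"
  shows "cons t" "lm t = 1" "set (leaves t) = {1..<Suc n}" "1 \<le> n"
proof -
  have l: "leaves t = [1..<n+1]" using assms by (simp add: B_def)
  then show "1 \<le> n" using leaves_ne[of t] by (cases n) auto
  then have "hd [1..<n+1] = 1" by (intro hd_upt) simp
  then have "hd (leaves t) = 1" using l by simp
  then show lm: "lm t = 1" by (simp add: hd_leaves)
  show "cons t" using l lm by (simp add: cons_def)
  show "set (leaves t) = {1..<Suc n}" unfolding l by (simp only: set_upt Suc_eq_plus1)
qed

definition homT :: "('v \<times> 'v) set \<Rightarrow> (nat \<Rightarrow> 'v) \<Rightarrow> bterm \<Rightarrow> bool" where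
  "homT E f t \<longleftrightarrow> (\<forall>(a, b) \<in> tree_edges t. (f a, f b) \<in> E)"

lemma eval_Some: "eval E (\<lambda>i. Some (f i)) t = (if homT E f t then Some (f (lm t)) else None)"
  by (induction t) (auto simp: homT_def gmult_def)

lemma sat_hom: "satisfies E t t' \<Longrightarrow> homT E f t \<longleftrightarrow> homT E f t'"
  unfolding satisfies_def
  by (metis eval_Some option.distinct(1))

lemma (in ctree) homT_iff: "homT E' f t \<longleftrightarrow> (\<forall>y \<in> V. y \<noteq> rt \<longrightarrow> (f (p y), f y) \<in> E')"
  unfolding homT_def using facts(1) by auto


abbreviation hs :: "bterm \<Rightarrow> nat \<Rightarrow> nat" where "hs t x \<equiv> height_sub (tree_edges t) x"

lemma omega_gen:
  assumes fin: "finite (Omega t1 t2)" and z: "(0, h0) \<in> Omega t1 t2"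
  shows "\<exists>d h. (d, h) \<in> Omega t1 t2 \<and> d \<le> r \<and> d + h = omega t1 t2 r"
    and "\<And>d h. (d, h) \<in> Omega t1 t2 \<Longrightarrow> d \<le> r \<Longrightarrow> omega t1 t2 r \<le> d + h"
proof -
  let ?Om = "Omega t1 t2"
  let ?S = "{d + h | d h. (d, h) \<in> ?Om}"
  let ?Sr = "{d + h | d h. (d, h) \<in> ?Om \<and> d \<le> r}"
  have S: "?S = (\<lambda>(d, h). d + h) ` ?Om" by auto
  have Sr: "?Sr = (\<lambda>(d, h). d + h) ` (?Om \<inter> {(d, h). d \<le> r})" by auto
  have fS: "finite ?S" unfolding S using fin by simp
  have fSr: "finite ?Sr" unfolding Sr using fin by simp
  have neS: "?S \<noteq> {}" using z by blast
  have neSr: "?Sr \<noteq> {}" using z by blast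
  have "(\<exists>d h. (d, h) \<in> ?Om \<and> d \<le> r \<and> d + h = omega t1 t2 r)
      \<and> (\<forall>d h. (d, h) \<in> ?Om \<longrightarrow> d \<le> r \<longrightarrow> omega t1 t2 r \<le> d + h)"
  proof (cases "r < xi t1 t2")
    case True
    then have om: "omega t1 t2 r = Min ?Sr" by (simp add: omega_def)
    have "Min ?Sr \<in> ?Sr" using fSr neSr by (rule Min_in)
    then obtain d h where dh: "Min ?Sr = d + h" "(d, h) \<in> ?Om" "d \<le> r" by auto
    moreover have "\<forall>d h. (d, h) \<in> ?Om \<longrightarrow> d \<le> r \<longrightarrow> Min ?Sr \<le> d + h"
      using fSr by (auto intro: Min_le)
    ultimately show ?thesis unfolding om by metis
  next
    case False
    then have om: "omega t1 t2 r = Min ?S" by (simp add: omega_def xi_def)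
    have xi: "xi t1 t2 = Min ?S" by (simp add: xi_def)
    have "Min ?S \<in> ?S" using fS neS by (rule Min_in)
    then obtain d h where dh: "(d, h) \<in> ?Om" "d + h = Min ?S" by auto
    then have "d \<le> r" using False xi by simp
    moreover have "\<forall>d h. (d, h) \<in> ?Om \<longrightarrow> d \<le> r \<longrightarrow> Min ?S \<le> d + h"
      using fS by (auto intro: Min_le)
    ultimately show ?thesis unfolding om using dh by blast
  qed
  then show "\<exists>d h. (d, h) \<in> ?Om \<and> d \<le> r \<and> d + h = omega t1 t2 r"
    and "\<And>d h. (d, h) \<in> ?Om \<Longrightarrow> d \<le> r \<Longrightarrow> omega t1 t2 r \<le> d + h" by blast+
qed

locale tpair =
  fixes n :: nat and t1 t2 :: bterm and G :: "('v \<times> 'v) set"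
  assumes B1: "t1 \<in> B n" and B2: "t2 \<in> B n" and neq: "t1 \<noteq> t2" and sat: "satisfies G t1 t2"
begin

sublocale A: ctree t1 using B_facts(1)[OF B1] by unfold_locales
sublocale C: ctree t2 using B_facts(1)[OF B2] by unfold_locales

lemma Veq: "set (leaves t2) = set (leaves t1)" using B_facts(3)[OF B1] B_facts(3)[OF B2] by simp
lemma leq: "leaves t2 = leaves t1" using B1 B2 by (simp add: B_def)
lemma rteq: "lm t2 = lm t1" using B_facts(2)[OF B1] B_facts(2)[OF B2] by simp

lemma hom_eq: "homT G f t1 \<longleftrightarrow> homT G f t2" using sat_hom[OF sat] .

lemma sym: "tpair n t2 t1 G"
  using B1 B2 neq sat by unfold_locales (auto simp: satisfies_def)

lemma dep_ne: "\<exists>u \<in> A.V. A.D u \<noteq> C.D u"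
proof (rule ccontr)
  assume "\<not> ?thesis"
  then have "t1 = t2" using dep_inj[OF A.cons C.cons leq[symmetric]] by auto
  then show False using neq by simp
qed

definition Q :: "nat \<Rightarrow> bool" where
  "Q m \<longleftrightarrow> (\<forall>x \<in> set (leaves t1). (depth t1 x \<le> m \<or> depth t2 x \<le> m) \<longrightarrow> depth t1 x = depth t2 x)"

lemma Lpar_Q: "Lpar t1 t2 = Greatest Q" unfolding Lpar_def Q_def ..

lemma Q_dep: "Q m \<longleftrightarrow> (\<forall>x \<in> A.V. (A.D x \<le> m \<or> C.D x \<le> m) \<longrightarrow> A.D x = C.D x)"
  unfolding Q_def using A.depth_eq C.depth_eq Veq by auto

lemma Q0: "Q 0"
  unfolding Q_dep
proof (intro ballI impI)
  fix x assume x: "x \<in> A.V" and h: "A.D x \<le> 0 \<or> C.D x \<le> 0"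
  have xC: "x \<in> C.V" using x Veq by simp
  have "x = lm t1"
  proof (cases "A.D x = 0")
    case True then show ?thesis using A.D_zero[OF x] by simp
  next
    case False
    then have "C.D x = 0" using h by simp
    then show ?thesis using C.D_zero[OF xC] rteq by simp
  qed
  then show "A.D x = C.D x" using A.facts(2) C.facts(2) rteq by simp
qed

lemma Q_bound: obtains b where "\<And>m. Q m \<Longrightarrow> m \<le> b"
proof -
  obtain u where u: "u \<in> A.V" "A.D u \<noteq> C.D u" using dep_ne by blast
  have "m \<le> A.D u" if "Q m" for m
  proof (rule ccontr)
    assume "\<not> m \<le> A.D u"
    then have "A.D u \<le> m" by simp
    then have "A.D u = C.D u" using that u(1) unfolding Q_dep by blast
    then show False using u(2) by simp
  qed
  then show ?thesis using that by blast
qed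

abbreviation "L \<equiv> Lpar t1 t2"

lemma L_agree: "y \<in> A.V \<Longrightarrow> A.D y \<le> L \<or> C.D y \<le> L \<Longrightarrow> A.D y = C.D y"
proof -
  obtain b where b: "\<And>m. Q m \<Longrightarrow> m \<le> b" using Q_bound by blast
  have "Q L" unfolding Lpar_Q using GreatestI_nat[of Q 0 b] Q0 b by blast
  then show "y \<in> A.V \<Longrightarrow> A.D y \<le> L \<or> C.D y \<le> L \<Longrightarrow> A.D y = C.D y" unfolding Q_dep by blast
qed

lemma L_witness: "\<exists>u \<in> A.V. (A.D u = Suc L \<and> Suc L < C.D u) \<or> (C.D u = Suc L \<and> Suc L < A.D u)"
proof -
  obtain b where b: "\<And>m. Q m \<Longrightarrow> m \<le> b" using Q_bound by blast
  have "\<not> Q (Suc L)"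
  proof
    assume "Q (Suc L)"
    then have "Suc L \<le> Greatest Q" using Greatest_le_nat[of Q "Suc L" b] b by blast
    then show False unfolding Lpar_Q by simp
  qed
  then obtain u where u: "u \<in> A.V" "A.D u \<le> Suc L \<or> C.D u \<le> Suc L" "A.D u \<noteq> C.D u"
    unfolding Q_dep by blast
  have "\<not> (A.D u \<le> L \<or> C.D u \<le> L)" using L_agree[OF u(1)] u(3) by blast
  then have "(A.D u = Suc L \<and> Suc L < C.D u) \<or> (C.D u = Suc L \<and> Suc L < A.D u)"
    using u(2,3) by linarith
  then show ?thesis using u(1) by blast
qed

lemma desc_root: "desc (tree_edges t) (lm t) = set (leaves t)" if "ctree t" for t
proof -
  interpret X: ctree t by (rule that)
  show ?thesis
    using X.root_reach X.rtr_props[OF _ X.rt_in] relpow_imp_rtrancl unfolding desc_def by blast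
qed

lemma edges_sub: "tree_edges t \<subseteq> set (leaves t) \<times> set (leaves t)" if "ctree t" for t
proof -
  interpret X: ctree t by (rule that)
  show ?thesis using X.edge_iff X.facts(3) by auto
qed

lemma root_Delta: "lm t1 \<in> Delta t1 t2"
proof -
  have "tree_edges t1 \<noteq> tree_edges t2"
  proof
    assume e: "tree_edges t1 = tree_edges t2"
    have "\<forall>y \<in> A.V. A.D y = C.D y"
    proof
      fix y assume y: "y \<in> A.V"
      have "depth t1 y = depth t2 y" unfolding depth_def using e rteq by simp
      then show "A.D y = C.D y" using A.depth_eq[OF y] C.depth_eq y Veq by simp
    qed
    then have "t1 = t2" using dep_inj[OF A.cons C.cons leq[symmetric]] by simp
    then show False using neq by simp
  qed
  moreover have "subtree (tree_edges t1) (lm t1) = (A.V, tree_edges t1)"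
    using desc_root[OF A.ctree_axioms] edges_sub[OF A.ctree_axioms] by (auto simp: subtree_def)
  moreover have "subtree (tree_edges t2) (lm t1) = (A.V, tree_edges t2)"
    using desc_root[OF C.ctree_axioms] edges_sub[OF C.ctree_axioms] Veq rteq by (auto simp: subtree_def)
  ultimately show ?thesis unfolding Delta_def using A.rt_in by auto
qed

lemma Delta_sub: "Delta t1 t2 \<subseteq> A.V" by (auto simp: Delta_def)

lemma omega_facts:
  shows "\<exists>x \<in> Delta t1 t2. (A.D x \<le> r \<and> A.D x + hs t1 x = omega t1 t2 r)
                        \<or> (C.D x \<le> r \<and> C.D x + hs t2 x = omega t1 t2 r)"
    and "\<And>x. x \<in> Delta t1 t2 \<Longrightarrow> A.D x \<le> r \<Longrightarrow> omega t1 t2 r \<le> A.D x + hs t1 x"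
    and "\<And>x. x \<in> Delta t1 t2 \<Longrightarrow> C.D x \<le> r \<Longrightarrow> omega t1 t2 r \<le> C.D x + hs t2 x"
proof -
  have dd: "depth t1 x = A.D x" "depth t2 x = C.D x" if "x \<in> Delta t1 t2" for x
    using that Delta_sub A.depth_eq C.depth_eq Veq by auto
  have fin: "finite (Omega t1 t2)"
    unfolding Omega_def using finite_subset[OF Delta_sub A.finV] by auto
  have z: "(0, hs t1 (lm t1)) \<in> Omega t1 t2"
    unfolding Omega_def using root_Delta dd[OF root_Delta] A.facts(2) by auto
  note G1 = omega_gen(1)[OF fin z, of r] and G2 = omega_gen(2)[OF fin z, of _ r]
  from G1 obtain d h where dh: "(d, h) \<in> Omega t1 t2" "d \<le> r" "d + h = omega t1 t2 r" by blast
  then obtain x where x: "x \<in> Delta t1 t2"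
    "(d, h) = (depth t1 x, hs t1 x) \<or> (d, h) = (depth t2 x, hs t2 x)"
    unfolding Omega_def by blast
  then show "\<exists>x \<in> Delta t1 t2. (A.D x \<le> r \<and> A.D x + hs t1 x = omega t1 t2 r)
                        \<or> (C.D x \<le> r \<and> C.D x + hs t2 x = omega t1 t2 r)"
    using dh dd[OF x(1)] by auto
  show "\<And>x. x \<in> Delta t1 t2 \<Longrightarrow> A.D x \<le> r \<Longrightarrow> omega t1 t2 r \<le> A.D x + hs t1 x"
  proof -
    fix x assume x: "x \<in> Delta t1 t2" "A.D x \<le> r"
    have m: "(depth t1 x, hs t1 x) \<in> Omega t1 t2" unfolding Omega_def using x by blast
    have "omega t1 t2 r \<le> depth t1 x + hs t1 x"
      by (rule omega_gen(2)[OF fin z m]) (use x dd[OF x(1)] in simp)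
    then show "omega t1 t2 r \<le> A.D x + hs t1 x" using dd[OF x(1)] by simp
  qed
  show "\<And>x. x \<in> Delta t1 t2 \<Longrightarrow> C.D x \<le> r \<Longrightarrow> omega t1 t2 r \<le> C.D x + hs t2 x"
  proof -
    fix x assume x: "x \<in> Delta t1 t2" "C.D x \<le> r"
    have m: "(depth t2 x, hs t2 x) \<in> Omega t1 t2" unfolding Omega_def using x by blast
    have "omega t1 t2 r \<le> depth t2 x + hs t2 x"
      by (rule omega_gen(2)[OF fin z m]) (use x dd[OF x(1)] in simp)
    then show "omega t1 t2 r \<le> C.D x + hs t2 x" using dd[OF x(1)] by simp
  qed
qed

lemma Lpar_sym: "Lpar t2 t1 = Lpar t1 t2"
  unfolding Lpar_def Veq
proof (intro arg_cong[where f = Greatest] ext iffI ballI impI)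
  fix m x
  assume h: "\<forall>x\<in>A.V. depth t2 x \<le> m \<or> depth t1 x \<le> m \<longrightarrow> depth t2 x = depth t1 x"
    and x: "x \<in> A.V" "depth t1 x \<le> m \<or> depth t2 x \<le> m"
  then show "depth t1 x = depth t2 x" by auto
next
  fix m x
  assume h: "\<forall>x\<in>A.V. depth t1 x \<le> m \<or> depth t2 x \<le> m \<longrightarrow> depth t1 x = depth t2 x"
    and x: "x \<in> A.V" "depth t2 x \<le> m \<or> depth t1 x \<le> m"
  then show "depth t2 x = depth t1 x" by auto
qed

lemma Delta_sym: "Delta t2 t1 = Delta t1 t2"
  unfolding Delta_def using Veq by auto

lemma omega_sym: "omega t2 t1 = omega t1 t2"
proof -
  have "Omega t2 t1 = Omega t1 t2" unfolding Omega_def Delta_sym by auto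
  then show ?thesis unfolding omega_def xi_def by (auto simp: fun_eq_iff)
qed

lemma par_eq:
  assumes x: "x \<in> A.V"
    and dd: "\<And>y. (x, y) \<in> A.E\<^sup>* \<longleftrightarrow> (x, y) \<in> C.E\<^sup>*"
    and rel: "\<And>y. (x, y) \<in> A.E\<^sup>* \<Longrightarrow> A.D y + C.D x = C.D y + A.D x"
    and y: "(x, y) \<in> A.E\<^sup>*" "y \<noteq> x"
  shows "A.p y = C.p y"
proof -
  have s1: "(x, A.p y) \<in> A.E\<^sup>*" "y \<in> A.V" "y \<noteq> lm t1" using A.desc_step[OF y] by auto
  have s2: "(x, C.p y) \<in> C.E\<^sup>*" using C.desc_step[of x y] y dd by auto
  have yC: "y \<in> C.V" "y \<noteq> lm t2" using s1 Veq rteq by auto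
  have r1: "A.D (A.p y) + C.D x = C.D (A.p y) + A.D x" using rel s1 by blast
  have r2: "A.D (C.p y) + C.D x = C.D (C.p y) + A.D x" using rel s2 dd by blast
  have ry: "A.D y + C.D x = C.D y + A.D x" using rel y by blast
  have a1: "A.D y = Suc (A.D (A.p y))" using A.facts(5) s1 by blast
  have a2: "C.D y = Suc (C.D (C.p y))" using C.facts(5) yC by blast
  have l1: "A.p y < y" using A.facts(4) s1 by blast
  have l2: "C.p y < y" using C.facts(4) yC by blast
  show ?thesis
  proof (rule linorder_cases[of "A.p y" "C.p y"])
    assume lt: "A.p y < C.p y"
    have "A.D y \<le> A.D (C.p y)" using A.facts(6)[OF s1(2,3) lt l2] .
    then show ?thesis using r2 ry a2 by simp
  next
    assume lt: "C.p y < A.p y"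
    have "C.D y \<le> C.D (A.p y)" using C.facts(6)[OF yC lt l1] .
    then show ?thesis using r1 ry a1 by simp
  qed
qed

end

lemma (in tpair) subtree_eq:
  assumes x: "x \<in> A.V"
    and dd: "\<And>y. (x, y) \<in> A.E\<^sup>* \<longleftrightarrow> (x, y) \<in> C.E\<^sup>*"
    and rel: "\<And>y. (x, y) \<in> A.E\<^sup>* \<Longrightarrow> A.D y + C.D x = C.D y + A.D x"
  shows "subtree A.E x = subtree C.E x"
proof -
  let ?U = "desc A.E x"
  have U: "desc C.E x = ?U" using dd by (auto simp: desc_def)
  have xr: "x \<noteq> lm t1 \<Longrightarrow> x \<noteq> lm t2" using rteq by simp
  have "A.E \<inter> ?U \<times> ?U \<subseteq> C.E" 
  proof
    fix e assume e: "e \<in> A.E \<inter> ?U \<times> ?U"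
    then obtain a b where ab: "e = (a, b)" "(a, b) \<in> A.E" "(x, a) \<in> A.E\<^sup>*" "(x, b) \<in> A.E\<^sup>*"
      by (auto simp: desc_def)
    have b: "b \<in> A.V" "b \<noteq> lm t1" "a = A.p b" using ab(2) A.edge_iff by auto
    have bx: "b \<noteq> x"
    proof
      assume "b = x"
      then show False using A.par_not_desc[of x] x ab(3) b by simp
    qed
    have "A.p b = C.p b" using par_eq[OF x dd rel ab(4) bx] dd by blast
    then show "e \<in> C.E" using ab b C.edge_iff Veq rteq by auto
  qed
  moreover have "C.E \<inter> ?U \<times> ?U \<subseteq> A.E"
  proof
    fix e assume e: "e \<in> C.E \<inter> ?U \<times> ?U"
    then obtain a b where ab: "e = (a, b)" "(a, b) \<in> C.E" "(x, a) \<in> C.E\<^sup>*" "(x, b) \<in> C.E\<^sup>*"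
      using U by (auto simp: desc_def)
    have b: "b \<in> C.V" "b \<noteq> lm t2" "a = C.p b" using ab(2) C.edge_iff by auto
    have bx: "b \<noteq> x"
    proof
      assume "b = x"
      then show False using C.par_not_desc[of x] x ab(3) b Veq by simp
    qed
    have "A.p b = C.p b" using par_eq[OF x dd rel _ bx] ab(4) dd by blast
    then show "e \<in> A.E" using ab b A.edge_iff Veq rteq by auto
  qed
  ultimately show ?thesis unfolding subtree_def U by auto
qed


definition extw :: "('v \<times> 'v) set \<Rightarrow> 'v \<Rightarrow> bool" where
  "extw E z \<longleftrightarrow> (\<forall>N. \<exists>g. g 0 = z \<and> walk E g 0 N)"

definition iwalk :: "('v \<times> 'v) set \<Rightarrow> (nat \<Rightarrow> 'v) \<Rightarrow> bool" where
  "iwalk E f \<longleftrightarrow> (\<forall>k. (f k, f (Suc k)) \<in> E)"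

lemma iwalk_ext: "iwalk E f \<Longrightarrow> extw E (f k)"
  unfolding extw_def iwalk_def walk_def by (intro allI exI[of _ "\<lambda>i. f (k + i)"]) auto

lemma iwalk_walk: "iwalk E f \<Longrightarrow> walk E f i j"
  unfolding iwalk_def walk_def by auto

lemma ext_step: assumes "(a, b) \<in> E" "extw E b" shows "extw E a"
  unfolding extw_def
proof
  fix N
  obtain g where g: "g 0 = b" "walk E g 0 N" using assms(2) unfolding extw_def by blast
  let ?h = "\<lambda>i. if i = 0 then a else g (i - 1)"
  have "walk E ?h 0 N"
    unfolding walk_def
  proof (intro allI impI)
    fix i assume i: "0 \<le> i \<and> i < N"
    show "(?h i, ?h (Suc i)) \<in> E"
    proof (cases i)
      case 0 then show ?thesis using assms(1) g(1) by simp
    next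
      case (Suc i') then show ?thesis using g(2) i unfolding walk_def by simp
    qed
  qed
  then show "\<exists>g. g 0 = a \<and> walk E g 0 N" by (intro exI[of _ ?h]) simp
qed

lemma walk_mono: "walk E f i j \<Longrightarrow> i \<le> i' \<Longrightarrow> j' \<le> j \<Longrightarrow> walk E f i' j'"
  unfolding walk_def by auto

lemma ext_walk: assumes w: "walk E w i j" and k: "i \<le> k" "k \<le> j" and e: "extw E (w k)"
  shows "extw E (w i)"
  using k(1)
proof (induction i rule: inc_induct)
  case base show ?case by (rule e)
next
  case (step n)
  have "(w n, w (Suc n)) \<in> E" using w step.hyps k(2) unfolding walk_def by simp
  then show ?case using step.IH by (rule ext_step)
qed

lemma walk_rtr: assumes w: "walk E f i j" and h: "i \<le> k" "k \<le> l" "l \<le> j"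
  shows "(f k, f l) \<in> E\<^sup>*"
  using h(2)
proof (induction l rule: dec_induct)
  case base then show ?case by simp
next
  case (step n)
  have "(f n, f (Suc n)) \<in> E" using w step.hyps h unfolding walk_def by simp
  with step.IH show ?case by (rule rtrancl_into_rtrancl)
qed

lemma cycle_iwalk:
  assumes w: "walk E f i j" and bk: "(f j, f i) \<in> E" and m: "i \<le> m" "m \<le> j"
  shows "\<exists>Q. iwalk E Q \<and> Q 0 = f m"
proof -
  define c where "c = Suc (j - i)"
  have c0: "0 < c" by (simp add: c_def)
  define Q where "Q k = f (i + (m - i + k) mod c)" for k
  have "iwalk E Q"
    unfolding iwalk_def
  proof
    fix k
    let ?s = "(m - i + k) mod c"
    have s: "?s < c" using c0 by simp
    have ms: "(m - i + Suc k) mod c = (if Suc ?s = c then 0 else Suc ?s)"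
      using mod_Suc[of "m - i + k" c] by simp
    show "(Q k, Q (Suc k)) \<in> E"
    proof (cases "Suc ?s = c")
      case True
      then have "i + ?s = j" using m by (simp add: c_def)
      then show ?thesis using bk True ms unfolding Q_def by simp
    next
      case False
      have "?s \<noteq> j - i" using False by (simp add: c_def)
      moreover have "?s < Suc (j - i)" using s by (simp add: c_def)
      ultimately have "?s < j - i" by linarith
      then have "i + ?s < j" using m by linarith
      then have "(f (i + ?s), f (Suc (i + ?s))) \<in> E" using w unfolding walk_def by simp
      then show ?thesis using False ms unfolding Q_def by simp
    qed
  qed
  moreover have "Q 0 = f m" unfolding Q_def using m by (simp add: c_def)
  ultimately show ?thesis by blast
qed

lemma ext_cycle:
  assumes "walk E f i j" "(f j, f i) \<in> E" "i \<le> m" "m \<le> j"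
  shows "extw E (f m)"
proof -
  obtain Q where "iwalk E Q" "Q 0 = f m" using cycle_iwalk[OF assms] by blast
  then show ?thesis using iwalk_ext[of E Q 0] by simp
qed

lemma nontrivial_cycle:
  assumes w: "walk E f i j" and bk: "(f j, f i) \<in> E" and m: "i \<le> m" "m \<le> j"
  shows "nontrivial_scc E (f m)"
proof -
  obtain y where y: "(f m, y) \<in> E" "(y, f m) \<in> E\<^sup>*"
  proof (cases "m < j")
    case True
    have e1: "(f m, f (Suc m)) \<in> E" using w True m unfolding walk_def by simp
    have e2: "(f (Suc m), f j) \<in> E\<^sup>*" using walk_rtr[OF w, of "Suc m" j] True m by simp
    have e3: "(f j, f m) \<in> E\<^sup>*"
    proof -
      have "(f i, f m) \<in> E\<^sup>*" using walk_rtr[OF w, of i m] m by simp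
      then show ?thesis using bk by (rule converse_rtrancl_into_rtrancl[rotated])
    qed
    have "(f (Suc m), f m) \<in> E\<^sup>*" using e2 e3 by (rule rtrancl_trans)
    then show ?thesis by (rule that[OF e1])
  next
    case False
    then have "m = j" using m by simp
    moreover have "(f i, f m) \<in> E\<^sup>*" using walk_rtr[OF w, of i m] m by simp
    ultimately show ?thesis using that bk by blast
  qed
  show ?thesis
  proof (cases "y = f m")
    case True
    then show ?thesis using y unfolding nontrivial_scc_def by simp
  next
    case False
    have "y \<in> scc E (f m)" using y unfolding scc_def by auto
    then have "scc E (f m) \<noteq> {f m}" using False by auto
    then show ?thesis unfolding nontrivial_scc_def by simp
  qed
qed

lemma nontrivial_periodic:
  assumes "nontrivial_scc E u"
  shows "\<exists>P c. P 0 = u \<and> iwalk E P \<and> 0 < c \<and> (\<forall>k. P (k + c) = P k)"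
proof -
  obtain C c where C: "C 0 = u" "C c = u" "0 < c" "\<forall>i<c. (C i, C (Suc i)) \<in> E"
  proof (cases "(u, u) \<in> E")
    case True
    then show ?thesis using that[of "\<lambda>_. u" 1] by simp
  next
    case False
    then have "scc E u \<noteq> {u}" using assms unfolding nontrivial_scc_def by simp
    moreover have "u \<in> scc E u" unfolding scc_def by simp
    ultimately obtain u' where u': "u' \<in> scc E u" "u' \<noteq> u" by blast
    then have r: "(u, u') \<in> E\<^sup>*" "(u', u) \<in> E\<^sup>*" unfolding scc_def by auto
    obtain k1 where k1: "(u, u') \<in> E ^^ k1" using r(1) rtrancl_power by blast
    obtain k2 where k2: "(u', u) \<in> E ^^ k2" using r(2) rtrancl_power by blast
    have "k1 \<noteq> 0" using k1 u'(2) by (cases k1) auto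
    moreover have "(u, u) \<in> E ^^ (k1 + k2)" using k1 k2 relpow_add by blast
    ultimately obtain f where f: "f 0 = u" "f (k1 + k2) = u" "\<forall>i<k1 + k2. (f i, f (Suc i)) \<in> E"
      unfolding relpow_fun_conv by blast
    show ?thesis by (rule that[of f "k1 + k2"]) (use f \<open>k1 \<noteq> 0\<close> in auto)
  qed
  define P where "P k = C (k mod c)" for k
  have "iwalk E P"
    unfolding iwalk_def
  proof
    fix k
    have s: "k mod c < c" using C(3) by simp
    have ms: "Suc k mod c = (if Suc (k mod c) = c then 0 else Suc (k mod c))" by (rule mod_Suc)
    show "(P k, P (Suc k)) \<in> E"
    proof (cases "Suc (k mod c) = c")
      case True
      then have km: "k mod c = c - 1" by simp
      have "c - 1 < c" using C(3) by simp
      then have "(C (c - 1), C (Suc (c - 1))) \<in> E" using C(4) by blast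
      moreover have "Suc (c - 1) = c" using C(3) by simp
      ultimately have "(C (k mod c), C c) \<in> E" using km by simp
      then show ?thesis using C(1,2) True ms unfolding P_def by simp
    next
      case False
      then show ?thesis using C(4) s ms unfolding P_def by simp
    qed
  qed
  moreover have "P 0 = u" using C(1) unfolding P_def by simp
  moreover have "\<forall>k. P (k + c) = P k" unfolding P_def by simp
  ultimately show ?thesis using C(3) by blast
qed

lemma periodic_mult: "(\<forall>k. P (k + c) = P k) \<Longrightarrow> P (k + c * (m::nat)) = P (k::nat)"
proof (induction m)
  case 0 then show ?case by simp
next
  case (Suc m)
  have "k + c * Suc m = (k + c * m) + c" by simp
  then have "P (k + c * Suc m) = P (k + c * m)" using Suc.prems by metis
  then show ?case using Suc by simp
qed


context tpair
begin

definition good :: "(nat \<Rightarrow> 'v) \<Rightarrow> nat \<Rightarrow> bool" where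
  "good w M \<longleftrightarrow> (\<exists>k. Suc L \<le> k \<and> k \<le> M \<and> extw G (w k))"

lemma homA: "homT G f t1 \<longleftrightarrow> (\<forall>y \<in> A.V. y \<noteq> lm t1 \<longrightarrow> (f (A.p y), f y) \<in> G)"
  by (rule A.homT_iff)

lemma homC: "homT G f t2 \<longleftrightarrow> (\<forall>y \<in> A.V. y \<noteq> lm t1 \<longrightarrow> (f (C.p y), f y) \<in> G)"
  using C.homT_iff Veq rteq by simp

lemma roundA:
  assumes r: "1 \<le> r" "r \<le> Suc L"
    and w: "walk G w (r - 1) M" and Vw: "iwalk G Vw" "Vw (r - 1) = w (r - 1)"
    and x: "x \<in> A.V" "A.D x \<le> L" "A.D x \<le> r"
    and U: "\<And>y. (x, y) \<in> A.E\<^sup>* \<longleftrightarrow> (x, y) \<in> C.E\<^sup>*"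
    and bound: "\<And>y. (x, y) \<in> A.E\<^sup>* \<Longrightarrow> A.D y \<le> M"
    and ng: "\<not> good w M"
  shows "\<forall>y. (x, y) \<in> A.E\<^sup>* \<longrightarrow> C.D y \<le> A.D y"
proof -
  define W where "W y \<longleftrightarrow> (x, y) \<in> A.E\<^sup>* \<and> r \<le> A.D y" for y
  define \<sigma> where "\<sigma> y = (if W y then w (A.D y) else Vw (A.D y))" for y
  have wE: "(w k, w (Suc k)) \<in> G" if "r - 1 \<le> k" "k < M" for k
    using w that unfolding walk_def by simp
  have VE: "(Vw k, Vw (Suc k)) \<in> G" for k using Vw(1) unfolding iwalk_def by simp
  have h1: "homT G \<sigma> t1"
    unfolding homA
  proof (intro ballI impI)
    fix y assume y: "y \<in> A.V" "y \<noteq> lm t1"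
    let ?a = "A.p y"
    have Dy: "A.D y = Suc (A.D ?a)" using A.facts(5)[OF y] .
    show "(\<sigma> ?a, \<sigma> y) \<in> G"
    proof (cases "W y")
      case True
      then have yd: "(x, y) \<in> A.E\<^sup>*" "r \<le> A.D y" unfolding W_def by auto
      have yM: "A.D y \<le> M" using bound yd(1) .
      show ?thesis
      proof (cases "W ?a")
        case True
        then have "r \<le> A.D ?a" unfolding W_def by simp
        then show ?thesis using \<open>W y\<close> True wE[of "A.D ?a"] Dy yM unfolding \<sigma>_def by simp
      next
        case False
        have "A.D ?a = r - 1"
        proof (cases "y = x")
          case True
          then show ?thesis using Dy x(3) yd(2) by simp
        next
          case False
          have "(x, ?a) \<in> A.E\<^sup>*" using A.desc_step[OF yd(1) False] by simp
          then have "A.D ?a < r" using \<open>\<not> W ?a\<close> unfolding W_def by simp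
          then show ?thesis using Dy yd(2) by simp
        qed
        then show ?thesis using \<open>W y\<close> False wE[of "r - 1"] Dy yM Vw(2) r unfolding \<sigma>_def by simp
      qed
    next
      case False
      have "\<not> W ?a"
      proof
        assume Wa: "W ?a"
        then have "(x, y) \<in> A.E\<^sup>*" using A.desc_child[OF _ y] unfolding W_def by blast
        then show False using False Wa Dy unfolding W_def by simp
      qed
      then show ?thesis using False VE Dy unfolding \<sigma>_def by simp
    qed
  qed
  then have h2: "homT G \<sigma> t2" using hom_eq by simp
  have key: "(x, y) \<in> A.E\<^sup>* \<and> Suc (A.D (C.p y)) \<le> A.D y"
    if y: "y \<in> A.V" "y \<noteq> lm t1" and a: "(x, C.p y) \<in> A.E\<^sup>*" "Suc L \<le> A.D (C.p y)" for y
  proof (rule ccontr)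
    assume nk: "\<not> ((x, y) \<in> A.E\<^sup>* \<and> Suc (A.D (C.p y)) \<le> A.D y)"
    let ?a = "C.p y"
    have Wa: "W ?a" using a r unfolding W_def by simp
    have aM: "A.D ?a \<le> M" using bound a(1) .
    have e: "(\<sigma> ?a, \<sigma> y) \<in> G" using h2 y unfolding homC by blast
    have "good w M"
    proof (cases "W y")
      case False
      then have "(w (A.D ?a), Vw (A.D y)) \<in> G" using e Wa unfolding \<sigma>_def by simp
      moreover have "extw G (Vw (A.D y))" using iwalk_ext[OF Vw(1)] .
      ultimately have "extw G (w (A.D ?a))" by (rule ext_step)
      then show ?thesis unfolding good_def using a(2) aM by blast
    next
      case True
      then have yy: "(x, y) \<in> A.E\<^sup>*" "r \<le> A.D y" unfolding W_def by auto
      then have le: "A.D y \<le> A.D ?a" using nk by simp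
      have "(w (A.D ?a), w (A.D y)) \<in> G" using e Wa True unfolding \<sigma>_def by simp
      moreover have "walk G w (A.D y) (A.D ?a)" using walk_mono[OF w] yy(2) aM by simp
      ultimately have "extw G (w (max (A.D y) (Suc L)))"
        using ext_cycle[of G w "A.D y" "A.D ?a" "max (A.D y) (Suc L)"] le a(2) by simp
      then show ?thesis unfolding good_def using a(2) aM le by (intro exI[of _ "max (A.D y) (Suc L)"]) simp
    qed
    then show False using ng by simp
  qed
  show ?thesis
  proof (intro allI impI)
    fix y assume "(x, y) \<in> A.E\<^sup>*"
    then have "(x, y) \<in> C.E\<^sup>*" using U by simp
    then show "C.D y \<le> A.D y"
    proof (induction rule: rtrancl_induct)
      case base
      then show ?case using L_agree[OF x(1)] x(2) by simp
    next
      case (step b c)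
      have c: "c \<in> A.V" "c \<noteq> lm t1" "b = C.p c" using step.hyps(2) C.edge_iff Veq rteq by auto
      have Dc: "C.D c = Suc (C.D b)" using C.facts(5)[of c] c Veq rteq by simp
      show ?case
      proof (cases "C.D c \<le> L")
        case True then show ?thesis using L_agree[OF c(1)] by simp
      next
        case False
        show ?thesis
        proof (cases "C.D b \<le> L")
          case True
          then have "C.D c = Suc L" using Dc False by simp
          moreover have "\<not> A.D c \<le> L" using L_agree[OF c(1)] False by auto
          ultimately show ?thesis by simp
        next
          case False2: False
          have bA: "(x, b) \<in> A.E\<^sup>*" using U step.hyps(1) by simp
          have "Suc L \<le> A.D b" using step.IH False2 by simp
          then have "Suc (A.D b) \<le> A.D c" using key[OF c(1,2)] bA c(3) by simp
          then show ?thesis using Dc step.IH by simp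
        qed
      qed
    qed
  qed
qed

end


context tpair
begin

lemma good_sym: "tpair.good t2 t1 G w M = good w M"
proof -
  interpret S: tpair n t2 t1 G by (rule sym)
  show ?thesis unfolding S.good_def good_def Lpar_sym ..
qed

lemma caseA:
  assumes r: "1 \<le> r" "r \<le> Suc L"
    and w: "walk G w (r - 1) M" and Vw: "iwalk G Vw" "Vw (r - 1) = w (r - 1)"
    and x: "x \<in> Delta t1 t2" "A.D x \<le> L" "A.D x \<le> r" "A.D x + hs t1 x = M"
  shows "good w M"
proof (rule ccontr)
  assume ng: "\<not> good w M"
  interpret S: tpair n t2 t1 G by (rule sym)
  have xV: "x \<in> A.V" using x(1) Delta_sub by blast
  have xC: "C.D x = A.D x" using L_agree[OF xV] x(2) by simp
  have U: "(x, y) \<in> A.E\<^sup>* \<longleftrightarrow> (x, y) \<in> C.E\<^sup>*" for y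
  proof -
    have xV2: "x \<in> C.V" using xV Veq by simp
    have eqv: "A.D x < A.D j \<longleftrightarrow> C.D x < C.D j" if "j \<in> A.V" for j
    proof (cases "A.D j \<le> L \<or> C.D j \<le> L")
      case True then show ?thesis using L_agree[OF that] xC by simp
    next
      case False then show ?thesis using x(2) xC by simp
    qed
    have jV: "j \<in> A.V" if "x < j" "j \<le> y" "y \<in> A.V" for j
      using that xV A.Vset by auto
    have "(y \<in> A.V \<and> x \<le> y \<and> (\<forall>j. x < j \<and> j \<le> y \<longrightarrow> A.D x < A.D j)) \<longleftrightarrow>
          (y \<in> A.V \<and> x \<le> y \<and> (\<forall>j. x < j \<and> j \<le> y \<longrightarrow> C.D x < C.D j))"
    proof
      assume h: "y \<in> A.V \<and> x \<le> y \<and> (\<forall>j. x < j \<and> j \<le> y \<longrightarrow> A.D x < A.D j)"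
      then show "y \<in> A.V \<and> x \<le> y \<and> (\<forall>j. x < j \<and> j \<le> y \<longrightarrow> C.D x < C.D j)"
        using eqv jV by blast
    next
      assume h: "y \<in> A.V \<and> x \<le> y \<and> (\<forall>j. x < j \<and> j \<le> y \<longrightarrow> C.D x < C.D j)"
      then show "y \<in> A.V \<and> x \<le> y \<and> (\<forall>j. x < j \<and> j \<le> y \<longrightarrow> A.D x < A.D j)"
        using eqv jV by blast
    qed
    then show ?thesis using A.desc_char[OF xV, of y] C.desc_char[OF xV2, of y] Veq by simp
  qed
  have bound: "A.D y \<le> M" if "(x, y) \<in> A.E\<^sup>*" for y
    using A.height_props(1)[OF xV that] x(4) by simp
  have r1: "\<forall>y. (x, y) \<in> A.E\<^sup>* \<longrightarrow> C.D y \<le> A.D y"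
    using roundA[OF r w Vw xV x(2,3) U bound ng] .
  have xV': "x \<in> set (leaves t2)" using xV Veq by simp
  have r2: "\<forall>y. (x, y) \<in> C.E\<^sup>* \<longrightarrow> A.D y \<le> C.D y"
  proof (rule S.roundA)
    show "1 \<le> r" "r \<le> Suc (Lpar t2 t1)" using r Lpar_sym by auto
    show "walk G w (r - 1) M" "iwalk G Vw" "Vw (r - 1) = w (r - 1)" using w Vw by auto
    show "x \<in> set (leaves t2)" by (rule xV')
    show "dep t2 x \<le> Lpar t2 t1" "dep t2 x \<le> r" using x(2,3) xC Lpar_sym by auto
    show "(x, y) \<in> C.E\<^sup>* \<longleftrightarrow> (x, y) \<in> A.E\<^sup>*" for y using U by simp
    show "C.D y \<le> M" if "(x, y) \<in> C.E\<^sup>*" for y using r1 U that bound by force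
    show "\<not> S.good w M" using ng good_sym by simp
  qed
  have "subtree A.E x = subtree C.E x"
  proof (rule subtree_eq[OF xV U])
    fix y assume "(x, y) \<in> A.E\<^sup>*"
    then show "A.D y + C.D x = C.D y + A.D x" using r1 r2 U xC by force
  qed
  then show False using x(1) unfolding Delta_def by simp
qed

end


context tpair
begin

lemma caseB:
  assumes r: "r = Suc L"
    and w: "walk G w (r - 1) M" and Vw: "iwalk G Vw" "Vw (r - 1) = w (r - 1)"
    and shift: "\<And>a b. a \<le> b \<or> Suc L \<le> b \<Longrightarrow> \<exists>Q. iwalk G Q \<and> Q a = Vw b"
    and x: "x \<in> Delta t1 t2" "A.D x = Suc L" "A.D x + hs t1 x = M"
  shows "good w M"
proof (rule ccontr)
  assume ng: "\<not> good w M"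
  have xV: "x \<in> A.V" using x(1) Delta_sub by blast
  have xV2: "x \<in> C.V" using xV Veq by simp
  have xr: "x \<noteq> lm t1" using x(2) A.facts(2) by auto
  have xr2: "x \<noteq> lm t2" using xr rteq by simp
  have boundA: "A.D y \<le> M" "Suc L \<le> A.D y" if "(x, y) \<in> A.E\<^sup>*" for y
    using A.height_props(1)[OF xV that] x A.rtr_props[OF that xV] by auto
  have SLM: "Suc L \<le> M" using x by simp
  have wE: "(w k, w (Suc k)) \<in> G" if "L \<le> k" "k < M" for k
    using w that r unfolding walk_def by simp
  have VE: "(Vw k, Vw (Suc k)) \<in> G" for k using Vw(1) unfolding iwalk_def by simp
  have VL: "Vw L = w L" using Vw(2) r by simp
  define \<sigma> where "\<sigma> y = (if (x, y) \<in> A.E\<^sup>* then w (A.D y) else Vw (A.D y))" for y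
  have h1: "homT G \<sigma> t1"
    unfolding homA
  proof (intro ballI impI)
    fix y assume y: "y \<in> A.V" "y \<noteq> lm t1"
    let ?a = "A.p y"
    have Dy: "A.D y = Suc (A.D ?a)" using A.facts(5)[OF y] .
    show "(\<sigma> ?a, \<sigma> y) \<in> G"
    proof (cases "(x, y) \<in> A.E\<^sup>*")
      case True
      show ?thesis
      proof (cases "y = x")
        case True
        have "(x, ?a) \<notin> A.E\<^sup>*" using A.par_not_desc[OF xV xr] True by simp
        then show ?thesis using True x(2) Dy VL wE[of L] SLM unfolding \<sigma>_def by simp
      next
        case False
        have "(x, ?a) \<in> A.E\<^sup>*" using A.desc_step[OF \<open>(x, y) \<in> A.E\<^sup>*\<close> False] by simp
        then show ?thesis using \<open>(x, y) \<in> A.E\<^sup>*\<close> boundA[of ?a] boundA[of y] Dy wE[of "A.D ?a"]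
          unfolding \<sigma>_def by simp
      qed
    next
      case False
      have "(x, ?a) \<notin> A.E\<^sup>*" using A.desc_child[OF _ y] False by blast
      then show ?thesis using False VE Dy unfolding \<sigma>_def by simp
    qed
  qed
  then have h2: "homT G \<sigma> t2" using hom_eq by simp
  have key1: "(x, y) \<in> A.E\<^sup>* \<and> Suc (A.D (C.p y)) \<le> A.D y"
    if y: "y \<in> A.V" "y \<noteq> lm t1" and a: "(x, C.p y) \<in> A.E\<^sup>*" for y
  proof (rule ccontr)
    assume nk: "\<not> ((x, y) \<in> A.E\<^sup>* \<and> Suc (A.D (C.p y)) \<le> A.D y)"
    let ?a = "C.p y"
    have aM: "A.D ?a \<le> M" "Suc L \<le> A.D ?a" using boundA a by auto
    have e: "(\<sigma> ?a, \<sigma> y) \<in> G" using h2 y unfolding homC by blast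
    have "good w M"
    proof (cases "(x, y) \<in> A.E\<^sup>*")
      case False
      then have "(w (A.D ?a), Vw (A.D y)) \<in> G" using e a unfolding \<sigma>_def by simp
      moreover have "extw G (Vw (A.D y))" using iwalk_ext[OF Vw(1)] .
      ultimately have "extw G (w (A.D ?a))" by (rule ext_step)
      then show ?thesis unfolding good_def using aM by blast
    next
      case True
      then have le: "A.D y \<le> A.D ?a" using nk by simp
      have yL: "Suc L \<le> A.D y" using boundA True by simp
      have "(w (A.D ?a), w (A.D y)) \<in> G" using e a True unfolding \<sigma>_def by simp
      moreover have "walk G w (A.D y) (A.D ?a)" using walk_mono[OF w] yL aM r by simp
      ultimately have "extw G (w (A.D y))"
        using ext_cycle[of G w "A.D y" "A.D ?a" "A.D y"] le by simp
      then show ?thesis unfolding good_def using yL aM le by (intro exI[of _ "A.D y"]) simp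
    qed
    then show False using ng by simp
  qed
  define p where "p = C.p x"
  have pnot: "(x, p) \<notin> A.E\<^sup>*"
  proof
    assume "(x, p) \<in> A.E\<^sup>*"
    then have "x \<le> p" using A.rtr_props xV by blast
    moreover have "p < x" using C.facts(4)[OF xV2 xr2] p_def by simp
    ultimately show False by simp
  qed
  have edge0: "(Vw (A.D p), w (Suc L)) \<in> G"
  proof -
    have "(\<sigma> p, \<sigma> x) \<in> G" using h2 xV xr unfolding homC p_def by blast
    then show ?thesis using pnot x(2) unfolding \<sigma>_def by simp
  qed
  have R1: "(x, y) \<in> A.E\<^sup>* \<and> C.D y + A.D x \<le> A.D y + C.D x" if "(x, y) \<in> C.E\<^sup>*" for y
    using that
  proof (induction rule: rtrancl_induct)
    case base then show ?case by simp
  next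
    case (step b c)
    have c: "c \<in> A.V" "c \<noteq> lm t1" "b = C.p c" using step.hyps(2) C.edge_iff Veq rteq by auto
    have Dc: "C.D c = Suc (C.D b)" using C.facts(5)[of c] c Veq rteq by simp
    have "(x, c) \<in> A.E\<^sup>* \<and> Suc (A.D b) \<le> A.D c" using key1[OF c(1,2)] step.IH c(3) by simp
    then show ?case using step.IH Dc by simp
  qed
  have boundC: "Suc L + C.D y - C.D x \<le> M" "C.D x \<le> C.D y" if "(x, y) \<in> C.E\<^sup>*" for y
  proof -
    have "(x, y) \<in> A.E\<^sup>*" "C.D y + A.D x \<le> A.D y + C.D x" using R1[OF that] by auto
    then show "Suc L + C.D y - C.D x \<le> M" using boundA x(2) by fastforce
    show "C.D x \<le> C.D y" using C.rtr_props[OF that xV2] by simp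
  qed
  obtain Q where Q: "iwalk G Q" "Q (C.D p) = Vw (A.D p)"
  proof -
    have pV: "p \<in> A.V" using C.facts(3)[OF xV2 xr2] Veq p_def by simp
    have "C.D p \<le> A.D p \<or> Suc L \<le> A.D p"
    proof (cases "A.D p \<le> L")
      case True then show ?thesis using L_agree[OF pV] by simp
    next
      case False then show ?thesis by simp
    qed
    then show ?thesis using shift that by blast
  qed
  have QE: "(Q k, Q (Suc k)) \<in> G" for k using Q(1) unfolding iwalk_def by simp
  define \<tau> where "\<tau> y = (if (x, y) \<in> C.E\<^sup>* then w (Suc L + C.D y - C.D x) else Q (C.D y))" for y
  have g2: "homT G \<tau> t2"
    unfolding homC
  proof (intro ballI impI)
    fix y assume y: "y \<in> A.V" "y \<noteq> lm t1"
    have yC: "y \<in> C.V" "y \<noteq> lm t2" using y Veq rteq by auto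
    let ?a = "C.p y"
    have Dy: "C.D y = Suc (C.D ?a)" using C.facts(5)[OF yC] .
    show "(\<tau> ?a, \<tau> y) \<in> G"
    proof (cases "(x, y) \<in> C.E\<^sup>*")
      case True
      show ?thesis
      proof (cases "y = x")
        case True
        have "(x, ?a) \<notin> C.E\<^sup>*" using C.par_not_desc[OF xV2 xr2] True by simp
        then show ?thesis using True edge0 Q(2) unfolding \<tau>_def p_def by simp
      next
        case False
        have ad: "(x, ?a) \<in> C.E\<^sup>*" using C.desc_step[OF \<open>(x, y) \<in> C.E\<^sup>*\<close> False] by simp
        have b1: "C.D x \<le> C.D ?a" using boundC(2)[OF ad] .
        have b2: "Suc L + C.D y - C.D x \<le> M" using boundC(1) \<open>(x, y) \<in> C.E\<^sup>*\<close> by blast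
        have "(w (Suc L + C.D ?a - C.D x), w (Suc (Suc L + C.D ?a - C.D x))) \<in> G"
          using wE b1 b2 Dy by simp
        moreover have "Suc L + C.D y - C.D x = Suc (Suc L + C.D ?a - C.D x)" using Dy b1 by simp
        ultimately show ?thesis using ad \<open>(x, y) \<in> C.E\<^sup>*\<close> unfolding \<tau>_def by simp
      qed
    next
      case False
      have "(x, ?a) \<notin> C.E\<^sup>*" using C.desc_child[OF _ yC] False by blast
      then show ?thesis using False QE Dy unfolding \<tau>_def by simp
    qed
  qed
  then have g1: "homT G \<tau> t1" using hom_eq by simp
  have key2: "(x, y) \<in> C.E\<^sup>* \<and> Suc (C.D (A.p y)) \<le> C.D y"
    if y: "y \<in> A.V" "y \<noteq> lm t1" and a: "(x, A.p y) \<in> C.E\<^sup>*" for y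
  proof (rule ccontr)
    assume nk: "\<not> ((x, y) \<in> C.E\<^sup>* \<and> Suc (C.D (A.p y)) \<le> C.D y)"
    let ?a = "A.p y"
    let ?k = "Suc L + C.D ?a - C.D x"
    have kM: "?k \<le> M" "Suc L \<le> ?k" using boundC[OF a] by auto
    have e: "(\<tau> ?a, \<tau> y) \<in> G" using g1 y unfolding homA by blast
    have "good w M"
    proof (cases "(x, y) \<in> C.E\<^sup>*")
      case False
      then have "(w ?k, Q (C.D y)) \<in> G" using e a unfolding \<tau>_def by simp
      moreover have "extw G (Q (C.D y))" using iwalk_ext[OF Q(1)] .
      ultimately have "extw G (w ?k)" by (rule ext_step)
      then show ?thesis unfolding good_def using kM by blast
    next
      case True
      let ?k' = "Suc L + C.D y - C.D x"
      have le: "C.D y \<le> C.D ?a" using nk True by simp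
      have k'b: "Suc L \<le> ?k'" "?k' \<le> ?k" using boundC(2)[OF True] le by auto
      have "(w ?k, w ?k') \<in> G" using e a True unfolding \<tau>_def by simp
      moreover have "walk G w ?k' ?k" using walk_mono[OF w] k'b kM r by simp
      ultimately have "extw G (w ?k')"
        using ext_cycle[of G w ?k' ?k ?k'] k'b by simp
      then show ?thesis unfolding good_def using k'b kM by (intro exI[of _ ?k']) simp
    qed
    then show False using ng by simp
  qed
  have R2: "(x, y) \<in> C.E\<^sup>* \<and> A.D y + C.D x \<le> C.D y + A.D x" if "(x, y) \<in> A.E\<^sup>*" for y
    using that
  proof (induction rule: rtrancl_induct)
    case base then show ?case by simp
  next
    case (step b c)
    have c: "c \<in> A.V" "c \<noteq> lm t1" "b = A.p c" using step.hyps(2) A.edge_iff by auto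
    have Dc: "A.D c = Suc (A.D b)" using A.facts(5)[of c] c by simp
    have "(x, c) \<in> C.E\<^sup>* \<and> Suc (C.D b) \<le> C.D c" using key2[OF c(1,2)] step.IH c(3) by simp
    then show ?case using step.IH Dc by simp
  qed
  have U: "(x, y) \<in> A.E\<^sup>* \<longleftrightarrow> (x, y) \<in> C.E\<^sup>*" for y using R1 R2 by blast
  have "subtree A.E x = subtree C.E x"
  proof (rule subtree_eq[OF xV U])
    fix y assume "(x, y) \<in> A.E\<^sup>*"
    then show "A.D y + C.D x = C.D y + A.D x" using R1 R2 U by force
  qed
  then show False using x(1) unfolding Delta_def by simp
qed

end


lemma (in ctree) D_le: "y \<in> V \<Longrightarrow> D y + rt \<le> y"
proof (induction y rule: less_induct)
  case (less y)
  show ?case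
  proof (cases "y = rt")
    case True then show ?thesis using facts(2) by simp
  next
    case False
    have "D (p y) + rt \<le> p y" using less.IH facts(3,4) less.prems False by blast
    then show ?thesis using facts(4,5) less.prems False by fastforce
  qed
qed

context tpair
begin

lemma core:
  assumes r: "1 \<le> r" "r \<le> Suc L"
    and w: "walk G w (r - 1) (omega t1 t2 r)" and Vw: "iwalk G Vw" "Vw (r - 1) = w (r - 1)"
    and shift: "\<And>a b. a \<le> b \<or> Suc L \<le> b \<Longrightarrow> \<exists>Q. iwalk G Q \<and> Q a = Vw b"
  shows "good w (omega t1 t2 r)"
proof -
  interpret S: tpair n t2 t1 G by (rule sym)
  obtain x where x: "x \<in> Delta t1 t2"
    "(A.D x \<le> r \<and> A.D x + hs t1 x = omega t1 t2 r) \<or> (C.D x \<le> r \<and> C.D x + hs t2 x = omega t1 t2 r)"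
    using omega_facts(1) by blast
  show ?thesis
  proof (cases "A.D x \<le> r \<and> A.D x + hs t1 x = omega t1 t2 r")
    case True
    show ?thesis
    proof (cases "A.D x \<le> L")
      case True2: True
      show ?thesis by (rule caseA[OF r w Vw x(1) True2]) (use True in auto)
    next
      case False
      then have e: "A.D x = Suc L" "r = Suc L" using True r by auto
      show ?thesis by (rule caseB[OF e(2) w Vw shift x(1) e(1)]) (use True in auto)
    qed
  next
    case False
    then have xC: "C.D x \<le> r" "C.D x + hs t2 x = omega t1 t2 r" using x(2) by auto
    have x': "x \<in> Delta t2 t1" using x(1) S.Delta_sym by simp
    have r': "1 \<le> r" "r \<le> Suc (Lpar t2 t1)" using r Lpar_sym by auto
    show ?thesis
    proof (cases "C.D x \<le> L")
      case True
      have "S.good w (omega t1 t2 r)"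
        by (rule S.caseA[OF r' w Vw x']) (use True xC Lpar_sym in auto)
      then show ?thesis using good_sym by simp
    next
      case False
      then have e: "C.D x = Suc L" "r = Suc L" using xC r by auto
      have "S.good w (omega t1 t2 r)"
      proof (rule S.caseB[OF _ w Vw _ x'])
        show "r = Suc (Lpar t2 t1)" using e Lpar_sym by simp
        show "\<And>a b. a \<le> b \<or> Suc (Lpar t2 t1) \<le> b \<Longrightarrow> \<exists>Q. iwalk G Q \<and> Q a = Vw b"
          using shift Lpar_sym by simp
        show "dep t2 x = Suc (Lpar t2 t1)" using e Lpar_sym by simp
        show "dep t2 x + hs t2 x = omega t1 t2 r" using xC by simp
      qed
      then show ?thesis using good_sym by simp
    qed
  qed
qed

lemma lemmaA:
  assumes U: "walk G U 0 N" and bd: "\<And>y. y \<in> A.V \<Longrightarrow> A.D y \<le> N \<and> C.D y \<le> N"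
  shows "nontrivial_scc G (U (Suc L))"
proof -
  obtain u where u: "u \<in> A.V" "(A.D u = Suc L \<and> Suc L < C.D u) \<or> (C.D u = Suc L \<and> Suc L < A.D u)"
    using L_witness by blast
  have uC: "u \<in> C.V" using u Veq by simp
  have UE: "(U k, U (Suc k)) \<in> G" if "k < N" for k using U that unfolding walk_def by simp
  show ?thesis
  proof (cases "C.D u = Suc L \<and> Suc L < A.D u")
    case True
    define f where "f y = U (C.D y)" for y
    have "homT G f t2"
      unfolding homC
    proof (intro ballI impI)
      fix y assume y: "y \<in> A.V" "y \<noteq> lm t1"
      have yC: "y \<in> C.V" "y \<noteq> lm t2" using y Veq rteq by auto
      have "C.D y = Suc (C.D (C.p y))" using C.facts(5)[OF yC] .
      moreover have "C.D y \<le> N" using bd y by simp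
      ultimately show "(f (C.p y), f y) \<in> G" using UE[of "C.D (C.p y)"] unfolding f_def by simp
    qed
    then have "homT G f t1" using hom_eq by simp
    moreover have ur: "u \<noteq> lm t1" using True A.facts(2) by auto
    ultimately have e: "(U (C.D (A.p u)), U (Suc L)) \<in> G" using u(1) True unfolding homA f_def by force
    have aV: "A.p u \<in> A.V" using A.facts(3)[OF u(1) ur] .
    have "A.D u = Suc (A.D (A.p u))" using A.facts(5)[OF u(1) ur] .
    then have "Suc L \<le> A.D (A.p u)" using True by simp
    then have aL: "Suc L \<le> C.D (A.p u)" using L_agree[OF aV] by fastforce
    have "walk G U (Suc L) (C.D (A.p u))" using walk_mono[OF U] bd[OF aV] by simp
    then show ?thesis using nontrivial_cycle[of G U "Suc L" "C.D (A.p u)" "Suc L"] e aL by simp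
  next
    case False
    then have True': "A.D u = Suc L \<and> Suc L < C.D u" using u(2) by blast
    define f where "f y = U (A.D y)" for y
    have "homT G f t1"
      unfolding homA
    proof (intro ballI impI)
      fix y assume y: "y \<in> A.V" "y \<noteq> lm t1"
      have "A.D y = Suc (A.D (A.p y))" using A.facts(5)[OF y] .
      moreover have "A.D y \<le> N" using bd y by simp
      ultimately show "(f (A.p y), f y) \<in> G" using UE[of "A.D (A.p y)"] unfolding f_def by simp
    qed
    then have "homT G f t2" using hom_eq by simp
    moreover have ur: "u \<noteq> lm t1" using True' A.facts(2) by auto
    ultimately have e: "(U (A.D (C.p u)), U (Suc L)) \<in> G" using u(1) True' unfolding homC f_def by force
    have ur2: "u \<noteq> lm t2" using ur rteq by simp
    have aV: "C.p u \<in> A.V" using C.facts(3)[OF uC ur2] Veq by simp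
    have "C.D u = Suc (C.D (C.p u))" using C.facts(5)[OF uC ur2] .
    then have "Suc L \<le> C.D (C.p u)" using True' by simp
    then have aL: "Suc L \<le> A.D (C.p u)" using L_agree[OF aV] by fastforce
    have "walk G U (Suc L) (A.D (C.p u))" using walk_mono[OF U] bd[OF aV] by simp
    then show ?thesis using nontrivial_cycle[of G U "Suc L" "A.D (C.p u)" "Suc L"] e aL by simp
  qed
qed

end


lemma part1:
  fixes E :: "('v \<times> 'v) set" and t t' :: bterm and n :: nat
  assumes "t \<in> B n" and "t' \<in> B n" and "t \<noteq> t'"
    and "satisfies E t t'"
    and v: "walk E v 0 (Lpar t t' + 1)" and vn: "nontrivial_scc E (v (Lpar t t' + 1))"
    and r: "1 \<le> r" "r \<le> Lpar t t' + 1"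
    and wv: "w (r - 1) = v (r - 1)" and w: "walk E w (r - 1) (omega t t' r)"
  shows "nontrivial_scc E (w (Lpar t t' + 1))"
proof -
  interpret tpair n t t' E using assms(1-4) by unfold_locales
  obtain P c where P: "P 0 = v (Suc L)" "iwalk E P" "0 < c" "\<forall>k. P (k + c) = P k"
    using nontrivial_periodic[of E "v (Suc L)"] vn by auto
  define Vw where "Vw k = (if k \<le> Suc L then v k else P (k - Suc L))" for k
  have PE: "(P k, P (Suc k)) \<in> E" for k using P(2) unfolding iwalk_def by simp
  have iw: "iwalk E Vw"
    unfolding iwalk_def
  proof
    fix k
    show "(Vw k, Vw (Suc k)) \<in> E"
    proof (cases "Suc k \<le> Suc L")
      case True
      then show ?thesis using v unfolding Vw_def walk_def by simp
    next
      case False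
      show ?thesis
      proof (cases "k = Suc L")
        case True
        then show ?thesis using PE[of 0] P(1) unfolding Vw_def by simp
      next
        case False2: False
        then have "k - Suc L + 1 = Suc k - Suc L" using False by simp
        then show ?thesis using PE[of "k - Suc L"] False False2 unfolding Vw_def by simp
      qed
    qed
  qed
  have Vr: "Vw (r - 1) = w (r - 1)"
  proof -
    have "r - 1 \<le> Suc L" using r by linarith
    then show ?thesis using wv unfolding Vw_def by simp
  qed
  have shift: "\<exists>Q. iwalk E Q \<and> Q a = Vw b" if ab: "a \<le> b \<or> Suc L \<le> b" for a b
  proof (cases "a \<le> b")
    case True
    let ?Q = "\<lambda>k. Vw (k + (b - a))"
    have "iwalk E ?Q" using iw unfolding iwalk_def by simp
    then show ?thesis using True by (intro exI[of _ ?Q]) simp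
  next
    case False
    then have bL: "Suc L \<le> b" using ab by simp
    let ?e = "b - Suc L"
    let ?Q = "\<lambda>k. P (k + c * a + ?e - a)"
    have ca: "a \<le> c * a" using P(3) by simp
    have "iwalk E ?Q"
      unfolding iwalk_def
    proof
      fix k
      have "Suc k + c * a + ?e - a = Suc (k + c * a + ?e - a)" using ca by linarith
      then show "(?Q k, ?Q (Suc k)) \<in> E" using PE[of "k + c * a + ?e - a"] by simp
    qed
    moreover have "?Q a = Vw b"
    proof -
      have "a + c * a + ?e - a = ?e + c * a" by simp
      then have "?Q a = P (?e + c * a)" by (simp add: add.commute)
      also have "\<dots> = P ?e" by (rule periodic_mult) (use P(4) in simp)
      also have "\<dots> = Vw b"
      proof (cases "b = Suc L")
        case True then show ?thesis using P(1) unfolding Vw_def by simp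
      next
        case False then show ?thesis using bL unfolding Vw_def by simp
      qed
      finally show ?thesis .
    qed
    ultimately show ?thesis by blast
  qed
  have r': "1 \<le> r" "r \<le> Suc L" using r by auto
  have rL: "r - 1 < Suc L" "\<not> Suc L \<le> r - 1" using r by linarith+
  have "good w (omega t t' r)" by (rule core[OF r' w iw Vr shift])
  then obtain k where k: "Suc L \<le> k" "k \<le> omega t t' r" "extw E (w k)" unfolding good_def by blast
  have "extw E (w (Suc L))" using ext_walk[OF walk_mono[OF w] _ _ k(3), of "Suc L" k] k r by simp
  then obtain g where g: "g 0 = w (Suc L)" "walk E g 0 n" unfolding extw_def by blast
  define U where "U k = (if k \<le> r - 1 then v k else if k \<le> Suc L then w k else g (k - Suc L))" for k
  have U: "walk E U 0 (Suc L + n)"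
    unfolding walk_def
  proof (intro allI impI)
    fix i assume i: "0 \<le> i \<and> i < Suc L + n"
    show "(U i, U (Suc i)) \<in> E"
    proof (cases "Suc i \<le> r - 1")
      case True
      then show ?thesis using v r unfolding U_def walk_def by simp
    next
      case False
      show ?thesis
      proof (cases "Suc i \<le> Suc L")
        case True
        have "i < omega t t' r" using True k by simp
        moreover have "r - 1 \<le> i" using False by simp
        ultimately have "(w i, w (Suc i)) \<in> E" using w unfolding walk_def by simp
        moreover have "U i = w i"
        proof (cases "i \<le> r - 1")
          case True
          then have "i = r - 1" using False by simp
          then show ?thesis using wv unfolding U_def by simp
        next
          case False then show ?thesis using \<open>Suc i \<le> Suc L\<close> unfolding U_def by simp
        qed
        ultimately show ?thesis using True False unfolding U_def by simp
      next
        case False2: False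
        have "i - Suc L < n" using i False2 by simp
        then have e: "(g (i - Suc L), g (Suc (i - Suc L))) \<in> E" using g(2) unfolding walk_def by simp
        have "U i = g (i - Suc L)"
        proof (cases "i = Suc L")
          case True then show ?thesis using g(1) rL unfolding U_def by simp
        next
          case False then show ?thesis using False2 rL unfolding U_def by simp
        qed
        moreover have "U (Suc i) = g (Suc (i - Suc L))"
        proof -
          have "Suc i - Suc L = Suc (i - Suc L)" using False2 by simp
          moreover have "\<not> Suc i \<le> r - 1" "\<not> Suc i \<le> Suc L" using False2 rL by auto
          ultimately show ?thesis unfolding U_def by (simp only: if_False)
        qed
        ultimately show ?thesis using e by simp
      qed
    qed
  qed
  have bd: "A.D y \<le> Suc L + n \<and> C.D y \<le> Suc L + n" if "y \<in> A.V" for y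
  proof -
    have "A.D y + 1 \<le> y" using A.D_le[OF that] B_facts(2)[OF assms(1)] by simp
    moreover have "C.D y + 1 \<le> y" using C.D_le[of y] that Veq B_facts(2)[OF assms(2)] by simp
    moreover have "y \<le> n" using that B_facts(3)[OF assms(1)] by simp
    ultimately show ?thesis by simp
  qed
  have "nontrivial_scc E (U (Suc L))" using lemmaA[OF U] bd by blast
  moreover have "U (Suc L) = w (Suc L)" using rL unfolding U_def by simp
  ultimately show ?thesis by simp
qed

theorem lemma6p24:
  fixes E :: "('v \<times> 'v) set" and t t' :: bterm and n :: nat
  assumes "t \<in> B n" and "t' \<in> B n" and "t \<noteq> t'"
    and "satisfies E t t'"
  shows "(\<forall>(v :: nat \<Rightarrow> 'v) (w :: nat \<Rightarrow> 'v) r.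
            walk E v 0 (Lpar t t' + 1) \<and> nontrivial_scc E (v (Lpar t t' + 1))
            \<and> 1 \<le> r \<and> r \<le> Lpar t t' + 1
            \<and> w (r - 1) = v (r - 1) \<and> walk E w (r - 1) (omega t t' r)
            \<longrightarrow> nontrivial_scc E (w (Lpar t t' + 1)))
       \<and> (\<forall>r. 1 \<le> r \<and> r \<le> Lpar t t' + 1
            \<longrightarrow> omegaG E (Lpar t t' + 1) r < ereal (real (omega t t' r)))"
proof (intro conjI allI impI)
  fix v w :: "nat \<Rightarrow> 'v" and r
  assume h: "walk E v 0 (Lpar t t' + 1) \<and> nontrivial_scc E (v (Lpar t t' + 1))
            \<and> 1 \<le> r \<and> r \<le> Lpar t t' + 1
            \<and> w (r - 1) = v (r - 1) \<and> walk E w (r - 1) (omega t t' r)"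
  then show "nontrivial_scc E (w (Lpar t t' + 1))"
    using part1[OF assms, of v r w] by blast
next
  fix r assume r: "1 \<le> r \<and> r \<le> Lpar t t' + 1"
  let ?S = "omegaG_set E (Lpar t t' + 1) r"
  have lt: "m < omega t t' r" if m: "m \<in> ?S" for m
  proof (rule ccontr)
    assume "\<not> m < omega t t' r"
    then have le: "omega t t' r \<le> m" by simp
    obtain v w where vw: "walk E v 0 (Lpar t t' + 1)" "nontrivial_scc E (v (Lpar t t' + 1))"
      "w (r - 1) = v (r - 1)" "walk E w (r - 1) m" "\<not> nontrivial_scc E (w (Lpar t t' + 1))"
      using m unfolding omegaG_set_def by blast
    have "walk E w (r - 1) (omega t t' r)" using walk_mono[OF vw(4)] le by simp
    then have "nontrivial_scc E (w (Lpar t t' + 1))"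
      using part1[OF assms vw(1,2), of r w] r vw(3) by simp
    then show False using vw(5) by simp
  qed
  have "omegaG E (Lpar t t' + 1) r \<le> ereal (real (omega t t' r) - 1)"
    unfolding omegaG_def
  proof (rule Sup_least)
    fix x assume "x \<in> (\<lambda>m. ereal (real m)) ` ?S"
    then obtain m where m: "m \<in> ?S" "x = ereal (real m)" by blast
    have "m + 1 \<le> omega t t' r" using lt[OF m(1)] by simp
    then have "real m \<le> real (omega t t' r) - 1" by linarith
    then show "x \<le> ereal (real (omega t t' r) - 1)" using m(2) by simp
  qed
  also have "\<dots> < ereal (real (omega t t' r))" by simp
  finally show "omegaG E (Lpar t t' + 1) r < ereal (real (omega t t' r))" .
qed


end
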